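(* If $1\le q<p<r\le\infty$ and $\tau\in[1,\infty)$, or if $1\le q\le p\le r\le\tau=\infty$, then $\mathcal{M}\dot B^{p,\tau}_{q,r}(\mathbb{R}^n)$ is a ball Banach function space.
   Context: Let $Q_{\nu,m}:=2^\nu(m+(0,1]^n)$, $\nu\in\mathbb{Z}$, $m\in\mathbb{Z}^n$. For $0<q\le p\le r\le\infty$ and $\tau\in(0,\infty]$, the Besov--Bourgain--Morrey space $\mathcal{M}\dot B^{p,\tau}_{q,r}(\mathbb{R}^n)$ is the set of $f\in L^q_{\mathrm{loc}}(\mathbb{R}^n)$ with $\|f\|:=\{\sum_{\nu\in\mathbb{Z}}[\sum_{m\in\mathbb{Z}^n}(|Q_{\nu,m}|^{1/p-1/q}\|f\|_{L^q(Q_{\nu,m})})^r]^{\tau/r}\}^{1/\tau}<\infty$ (usual modifications if an exponent is $\infty$). A ball Banach function space is a Banach space $X\subset$ measurable functions on $\mathbb{R}^n$ whose norm is defined for all measurable functions and satisfies: (a) $\|f\|_X=0\Rightarrow f=0$ a.e.; (b) $|g|\le|f|$ a.e. $\Rightarrow\|g\|_X\le\|f\|_X$; (c) $0\le f_m\uparrow f$ a.e. $\Rightarrow\|f_m\|_X\uparrow\|f\|_X$; (d) $\mathbf 1_B\in X$ for every ball $B$; (e) triangle inequality; (f) for each ball $B$ there is $C_{(B)}$ with $\int_B|f|\le C_{(B)}\|f\|_X$ for all $f\in X$. *)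

theory Defs
  imports "HOL-Analysis.Analysis"
begin

text \<open>Exponents in (0,\<infinity>] are modelled as extended nonnegative reals (ennreal), with
  top standing for \<infinity>.  All (quasi-)norms take values in [0,\<infinity>].\<close>

definition epow :: "ennreal \<Rightarrow> real \<Rightarrow> ennreal" where
  "epow a s = (if a = top then top else ennreal (enn2real a powr s))"

definition Lq_norm :: "ennreal \<Rightarrow> ('a::euclidean_space) set \<Rightarrow> ('a \<Rightarrow> real) \<Rightarrow> ennreal" where
  "Lq_norm q A f =
     (if q = top then Inf {c. AE x in lebesgue. x \<in> A \<longrightarrow> ennreal \<bar>f x\<bar> \<le> c}
      else epow (\<integral>\<^sup>+ x. ennreal (\<bar>f x\<bar> powr enn2real q) * indicator A x \<partial>lebesgue)
                (1 / enn2real q))"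

definition seq_norm :: "ennreal \<Rightarrow> ('i \<Rightarrow> ennreal) \<Rightarrow> ennreal" where
  "seq_norm r g =
     (if r = top then (SUP i. g i)
      else epow (\<integral>\<^sup>+ i. epow (g i) (enn2real r) \<partial>count_space UNIV) (1 / enn2real r))"

text \<open>Dyadic cubes Q_{\<nu>,m} = 2^\<nu>(m + (0,1]^n).\<close>
definition dyadic_cube :: "int \<Rightarrow> int ^ 'n \<Rightarrow> (real ^ 'n) set" where
  "dyadic_cube \<nu> m = {x. \<forall>i. 2 powr real_of_int \<nu> * real_of_int (m $ i) < x $ i
                          \<and> x $ i \<le> 2 powr real_of_int \<nu> * (real_of_int (m $ i) + 1)}"

definition BBM_norm :: "ennreal \<Rightarrow> ennreal \<Rightarrow> ennreal \<Rightarrow> ennreal \<Rightarrow> (real ^ 'n \<Rightarrow> real) \<Rightarrow> ennreal" where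
  "BBM_norm p \<tau> q r f =
     seq_norm \<tau> (\<lambda>\<nu>::int. seq_norm r (\<lambda>m::int ^ 'n.
        ennreal (measure lebesgue (dyadic_cube \<nu> m) powr (enn2real (1 / p) - enn2real (1 / q)))
        * Lq_norm q (dyadic_cube \<nu> m) f))"

definition Lq_loc :: "ennreal \<Rightarrow> ('a::euclidean_space \<Rightarrow> real) \<Rightarrow> bool" where
  "Lq_loc q f \<longleftrightarrow> f \<in> borel_measurable lebesgue \<and> (\<forall>K. compact K \<longrightarrow> Lq_norm q K f < top)"

text \<open>The space \<M>\<dot>B^{p,\<tau>}_{q,r}(R^n), parameters in the order p \<tau> q r.\<close>
definition BBM_space :: "ennreal \<Rightarrow> ennreal \<Rightarrow> ennreal \<Rightarrow> ennreal \<Rightarrow> (real ^ 'n \<Rightarrow> real) set" where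
  "BBM_space p \<tau> q r = {f. Lq_loc q f \<and> BBM_norm p \<tau> q r f < top}"

text \<open>Ball Banach function space: X is a set of Lebesgue measurable functions, N a
  [0,\<infinity>]-valued functional defined on all measurable functions, X = {f. N f < \<infinity>},
  N is a norm on X (modulo a.e. equality, by (a)), X is complete, and (a)--(f) hold.\<close>
definition ball_Banach_function_space ::
  "('a::euclidean_space \<Rightarrow> real) set \<Rightarrow> (('a \<Rightarrow> real) \<Rightarrow> ennreal) \<Rightarrow> bool" where
  "ball_Banach_function_space X N \<longleftrightarrow>
     X \<subseteq> borel_measurable lebesgue
   \<and> (\<forall>f \<in> borel_measurable lebesgue. f \<in> X \<longleftrightarrow> N f < top)
   \<comment> \<open>norm: absolute homogeneity\<close>
   \<and> (\<forall>f \<in> X. \<forall>c::real. N (\<lambda>x. c * f x) = ennreal \<bar>c\<bar> * N f)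
   \<comment> \<open>(a)\<close>
   \<and> (\<forall>f \<in> borel_measurable lebesgue. N f = 0 \<longrightarrow> (AE x in lebesgue. f x = 0))
   \<comment> \<open>(b)\<close>
   \<and> (\<forall>f \<in> borel_measurable lebesgue. \<forall>g \<in> borel_measurable lebesgue.
        (AE x in lebesgue. \<bar>g x\<bar> \<le> \<bar>f x\<bar>) \<longrightarrow> N g \<le> N f)
   \<comment> \<open>(c) Fatou property\<close>
   \<and> (\<forall>F f. (\<forall>k. F k \<in> borel_measurable lebesgue) \<longrightarrow> f \<in> borel_measurable lebesgue \<longrightarrow>
        (\<forall>k. AE x in lebesgue. 0 \<le> F k x \<and> F k x \<le> F (Suc k) x) \<longrightarrow>
        (AE x in lebesgue. (\<lambda>k. F k x) \<longlonglongrightarrow> f x) \<longrightarrow>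
        incseq (\<lambda>k. N (F k)) \<and> (\<lambda>k. N (F k)) \<longlonglongrightarrow> N f)
   \<comment> \<open>(d)\<close>
   \<and> (\<forall>c r. indicator (ball c r) \<in> X)
   \<comment> \<open>(e) triangle inequality\<close>
   \<and> (\<forall>f \<in> X. \<forall>g \<in> X. N (\<lambda>x. f x + g x) \<le> N f + N g)
   \<comment> \<open>(f)\<close>
   \<and> (\<forall>c r. \<exists>C::real. \<forall>f \<in> X.
        (\<integral>\<^sup>+ x. ennreal \<bar>f x\<bar> * indicator (ball c r) x \<partial>lebesgue) \<le> ennreal C * N f)
   \<comment> \<open>completeness (Banach space)\<close>
   \<and> (\<forall>F. (\<forall>k. F k \<in> X) \<longrightarrow>
        (\<forall>e>0. \<exists>K. \<forall>k\<ge>K. \<forall>l\<ge>K. N (\<lambda>x. F k x - F l x) < e) \<longrightarrow>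
        (\<exists>f \<in> X. (\<lambda>k. N (\<lambda>x. F k x - f x)) \<longlonglongrightarrow> 0))"

end

theory Submission
  imports Defs
begin

lemma epow_top[simp]: "epow top s = top" by (simp add: epow_def)
lemma epow_ennreal: "0 \<le> x \<Longrightarrow> epow (ennreal x) s = ennreal (x powr s)"
  by (simp add: epow_def)
lemma epow_0[simp]: "s > 0 \<Longrightarrow> epow 0 s = 0"
  by (simp add: epow_def)

lemma epow_mono: assumes "a \<le> b" "s \<ge> 0" shows "epow a s \<le> epow b s"
proof (cases "b = top")
  case True then show ?thesis by simp
next
  case False
  then have "a \<noteq> top" using assms top_unique by auto
  then show ?thesis using False assms
    by (auto simp: epow_def intro!: ennreal_leI powr_mono2 enn2real_mono simp: top.not_eq_extremum)
qed

lemma epow_epow: assumes "s > 0" shows "epow (epow a s) (1/s) = a"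
proof (cases "a = top")
  case True then show ?thesis by simp
next
  case False
  then obtain x where "a = ennreal x" "x \<ge> 0" by (metis ennreal_cases)
  then show ?thesis using assms
    by (simp add: epow_def powr_powr)
qed

lemma epow_eq_0_iff: assumes "s > 0" shows "epow a s = 0 \<longleftrightarrow> a = 0"
  using assms by (cases a rule: ennreal_cases) (auto simp: epow_def)

lemma epow_eq_top_iff: "epow a s = top \<longleftrightarrow> a = top"
  by (cases a rule: ennreal_cases) (auto simp: epow_def)

lemma epow_mult: assumes "s > 0" shows "epow (a * b) s = epow a s * epow b s"
proof (cases "a = top \<or> b = top")
  case True
  then show ?thesis using assms
    by (auto simp: ennreal_mult_top ennreal_top_mult epow_eq_0_iff)
next
  case False
  then obtain x y where "a = ennreal x" "b = ennreal y" "x \<ge> 0" "y \<ge> 0"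
    by (metis ennreal_cases)
  then show ?thesis using assms
    by (simp add: epow_ennreal ennreal_mult'' [symmetric] powr_mult flip: ennreal_mult)
qed

lemma epow_1[simp]: "epow a 1 = a"
  by (cases a rule: ennreal_cases) (auto simp: epow_def)

lemma epow_SUP: assumes "s > 0" shows "epow (SUP i\<in>I. f i) s = (SUP i\<in>I. epow (f i) s)"
proof (rule antisym)
  let ?S = "(SUP i\<in>I. epow (f i) s)"
  have "(SUP i\<in>I. f i) \<le> epow ?S (1/s)"
  proof (rule SUP_least)
    fix i assume "i \<in> I"
    then have "epow (f i) s \<le> ?S" by (rule SUP_upper)
    then have "epow (epow (f i) s) (1/s) \<le> epow ?S (1/s)" using assms by (intro epow_mono) auto
    then show "f i \<le> epow ?S (1/s)" using epow_epow[OF assms] by simp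
  qed
  then have "epow (SUP i\<in>I. f i) s \<le> epow (epow ?S (1/s)) s" using assms by (intro epow_mono) auto
  also have "\<dots> = ?S" using epow_epow[of "1/s" ?S] assms by simp
  finally show "epow (SUP i\<in>I. f i) s \<le> ?S" .
  show "?S \<le> epow (SUP i\<in>I. f i) s"
    using assms by (intro SUP_least epow_mono SUP_upper) auto
qed

lemma epow_measurable[measurable]:
  assumes [measurable]: "g \<in> borel_measurable M"
  shows "(\<lambda>x. epow (g x) s) \<in> borel_measurable M"
  unfolding epow_def by measurable

definition ess :: "'a measure \<Rightarrow> ('a \<Rightarrow> ennreal) \<Rightarrow> ennreal" where
  "ess M g = Inf {c. AE x in M. g x \<le> c}"

lemma ess_le: "(AE x in M. g x \<le> c) \<Longrightarrow> ess M g \<le> c"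
  unfolding ess_def by (rule Inf_lower) simp

lemma AE_le_ess: "AE x in M. g x \<le> ess M g"
proof (cases "ess M g = top")
  case True then show ?thesis by simp
next
  case False
  let ?E = "ess M g"
  have "\<forall>n::nat. AE x in M. g x \<le> ?E + ennreal (1 / Suc n)"
  proof
    fix n :: nat
    have "?E < ?E + ennreal (1 / Suc n)"
      using False by (simp add: ennreal_add_left_cancel_less top.not_eq_extremum)
    then obtain c where "c \<in> {c. AE x in M. g x \<le> c}" "c < ?E + ennreal (1 / Suc n)"
      unfolding ess_def by (meson Inf_less_iff)
    then show "AE x in M. g x \<le> ?E + ennreal (1 / Suc n)"
      by (auto elim: eventually_mono)
  qed
  then have "AE x in M. \<forall>n::nat. g x \<le> ?E + ennreal (1 / Suc n)"
    by (simp add: AE_all_countable)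
  then show ?thesis
  proof (rule eventually_mono)
    fix x assume H: "\<forall>n::nat. g x \<le> ?E + ennreal (1 / Suc n)"
    show "g x \<le> ?E"
    proof (rule ennreal_le_epsilon)
      fix e :: real assume "0 < e"
      then obtain n where n: "inverse (real (Suc n)) < e" using reals_Archimedean by blast
      have "g x \<le> ?E + ennreal (1 / Suc n)" using H by blast
      also have "\<dots> \<le> ?E + ennreal e" using n
        by (intro add_left_mono ennreal_leI) (simp add: field_simps)
      finally show "g x \<le> ?E + ennreal e" .
    qed
  qed
qed

lemma ess_mono: "(AE x in M. g x \<le> h x) \<Longrightarrow> ess M g \<le> ess M h"
  by (rule ess_le) (use AE_le_ess[where M=M and g=h] in \<open>auto elim: eventually_mono[OF eventually_conj] intro: order_trans\<close>)

lemma ennreal_inv_cancel: "0 < c \<Longrightarrow> c < top \<Longrightarrow> (1/c) * (c * y) = (y::ennreal)"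
  by (metis ennreal_divide_self ennreal_times_divide mult.commute
    mult.right_neutral not_less_zero)

lemma ess_cmult_le: "ess M (\<lambda>x. c * g x) \<le> c * ess M g"
  by (rule ess_le) (use AE_le_ess[where M=M and g=g] in \<open>auto elim!: eventually_mono intro: mult_left_mono\<close>)

lemma ess_cmult: assumes "c < top" shows "ess M (\<lambda>x. c * g x) = c * ess M g"
proof (cases "c = 0")
  case True
  then show ?thesis using ess_cmult_le[of M c g] by simp
next
  case False
  then have c: "0 < c" by (simp add: zero_less_iff_neq_zero)
  have "ess M g = ess M (\<lambda>x. (1/c) * (c * g x))"
    using ennreal_inv_cancel[OF c assms] by simp
  also have "\<dots> \<le> (1/c) * ess M (\<lambda>x. c * g x)" by (rule ess_cmult_le)
  finally have "c * ess M g \<le> c * ((1/c) * ess M (\<lambda>x. c * g x))" by (rule mult_left_mono) simp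
  also have "\<dots> = ess M (\<lambda>x. c * g x)"
    using c assms by (metis ennreal_divide_self ennreal_times_divide mult.commute mult.right_neutral not_less_zero mult.assoc)
  finally show ?thesis using ess_cmult_le[of M c g] by (rule antisym[rotated])
qed

lemma ess_add: "ess M (\<lambda>x. g x + h x) \<le> ess M g + ess M h"
  by (rule ess_le) (use AE_le_ess[where M=M and g=g] AE_le_ess[where M=M and g=h] in \<open>auto elim!: eventually_mono[OF eventually_conj] intro: add_mono\<close>)

lemma ess_SUP: "ess M (\<lambda>x. SUP k. g k x) = (SUP k::nat. ess M (g k))"
proof (rule antisym)
  have "\<forall>k. AE x in M. g k x \<le> ess M (g k)" using AE_le_ess by blast
  then have "AE x in M. \<forall>k. g k x \<le> ess M (g k)" by (simp add: AE_all_countable)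
  then show "ess M (\<lambda>x. SUP k. g k x) \<le> (SUP k::nat. ess M (g k))"
    by (intro ess_le) (auto elim!: eventually_mono intro!: SUP_mono)
  show "(SUP k::nat. ess M (g k)) \<le> ess M (\<lambda>x. SUP k. g k x)"
    by (intro SUP_least ess_mono AE_I2) (auto intro: SUP_upper)
qed

lemma ess_zero: "ess M g = 0 \<Longrightarrow> AE x in M. g x = 0"
  using AE_le_ess[where M=M and g=g] by (auto elim!: eventually_mono)

lemma ess_count_space: "ess (count_space UNIV) g = (SUP i. g i)"
  unfolding ess_def AE_count_space
  by (rule antisym) (auto intro!: Inf_lower SUP_upper Inf_greatest SUP_least)

lemma ess_const_le: "ess M (\<lambda>x. 0) = 0"
  using ess_le[where M=M and g="\<lambda>x. 0" and c=0] by simp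

lemma mink_real_pos:
  fixes a b u v s :: real
  assumes s: "s \<ge> 1" and a: "a > 0" and b: "b > 0" and u: "u > 0" and v: "v > 0"
  shows "(u + v) powr s \<le> (a + b) powr (s - 1) * (a powr (1 - s) * u powr s + b powr (1 - s) * v powr s)"
proof -
  define t where "t = b / (a + b)"
  have t0: "t \<ge> 0" "t \<le> 1" using a b by (auto simp: t_def field_simps)
  have conv: "((1 - t) * (u/a) + t * (v/b)) powr s \<le> (1 - t) * (u/a) powr s + t * (v/b) powr s"
    using convex_onD[OF powr_convex[OF s] t0, of "u/a" "v/b"] a b u v by simp
  have ab: "a + b > 0" using a b by simp
  have e2: "1 - t = a / (a + b)" using a b by (simp add: t_def field_simps)
  have e1: "(1 - t) * (u/a) + t * (v/b) = (u + v) / (a + b)"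
  proof -
    have "a/(a+b)*(u/a) = u/(a+b)" "b/(a+b)*(v/b) = v/(a+b)" using a b by auto
    then show ?thesis using e2 unfolding t_def by (simp add: add_divide_distrib)
  qed
  have "((u + v) / (a + b)) powr s = (u + v) powr s / (a + b) powr s"
    using u v ab by (simp add: powr_divide)
  with conv e1 e2 have H: "(u + v) powr s / (a + b) powr s \<le> a / (a + b) * (u powr s / a powr s) + b / (a + b) * (v powr s / b powr s)"
    using a b u v by (simp add: powr_divide t_def)
  have "(u + v) powr s \<le> (a + b) powr s * (a / (a + b) * (u powr s / a powr s) + b / (a + b) * (v powr s / b powr s))"
    using H ab by (simp add: divide_le_eq mult.commute)
  also have "\<dots> = (a + b) powr s / (a + b) * (a / a powr s * u powr s + b / b powr s * v powr s)"
  proof -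
    have gen: "A \<noteq> 0 \<Longrightarrow> B \<noteq> 0 \<Longrightarrow> S \<noteq> 0 \<Longrightarrow> C * (a/S * (U/A) + b/S * (V/B)) = C/S * (a/A*U + b/B*V)"
      for A B S C U V :: real by (simp add: field_simps)
    have "a powr s \<noteq> 0" "b powr s \<noteq> 0" "a + b \<noteq> 0" using a b by auto
    from gen[OF this] show ?thesis .
  qed
  also have "\<dots> = (a + b) powr (s - 1) * (a powr (1 - s) * u powr s + b powr (1 - s) * v powr s)"
    using a b ab by (simp add: powr_diff)
  finally show ?thesis .
qed

lemma mink_real_aux:
  fixes a b v s :: real
  assumes s: "s \<ge> 1" and a: "a > 0" and b: "b > 0" and v: "v \<ge> 0"
  shows "v powr s \<le> (a + b) powr (s - 1) * (b powr (1 - s) * v powr s)"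
proof -
  have "b powr (s - 1) \<le> (a + b) powr (s - 1)" using a b s by (intro powr_mono2) auto
  then have "b powr (s - 1) * (b powr (1 - s) * v powr s) \<le> (a + b) powr (s - 1) * (b powr (1 - s) * v powr s)"
    by (rule mult_right_mono) simp
  moreover have "b powr (s - 1) * (b powr (1 - s) * v powr s) = v powr s"
    using b by (simp add: mult.assoc[symmetric] powr_add[symmetric])
  ultimately show ?thesis by simp
qed

lemma mink_real:
  fixes a b u v s :: real
  assumes s: "s \<ge> 1" and a: "a > 0" and b: "b > 0" and u: "u \<ge> 0" and v: "v \<ge> 0"
  shows "(u + v) powr s \<le> (a + b) powr (s - 1) * (a powr (1 - s) * u powr s + b powr (1 - s) * v powr s)"
proof (cases "u = 0 \<or> v = 0")
  case True
  then show ?thesis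
  proof
    assume "u = 0" then show ?thesis using mink_real_aux[OF s a b v] s by simp
  next
    assume "v = 0" then show ?thesis using mink_real_aux[OF s b a u] s by (simp add: add.commute)
  qed
next
  case False
  then show ?thesis using mink_real_pos[OF s a b] u v by simp
qed

definition pint :: "'a measure \<Rightarrow> real \<Rightarrow> ('a \<Rightarrow> ennreal) \<Rightarrow> ennreal" where
  "pint M s g = epow (\<integral>\<^sup>+x. epow (g x) s \<partial>M) (1/s)"

lemma pint_mono: assumes "AE x in M. g x \<le> h x" "s > 0" shows "pint M s g \<le> pint M s h"
  unfolding pint_def using assms
  by (intro epow_mono nn_integral_mono_AE) (auto elim!: eventually_mono intro: epow_mono)

lemma pint_cmult: assumes [measurable]: "g \<in> borel_measurable M" and "c < top" "s > 0"
  shows "pint M s (\<lambda>x. c * g x) = c * pint M s g"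
proof -
  have "(\<integral>\<^sup>+x. epow (c * g x) s \<partial>M) = (\<integral>\<^sup>+x. epow c s * epow (g x) s \<partial>M)"
    using assms by (simp add: epow_mult)
  also have "\<dots> = epow c s * (\<integral>\<^sup>+x. epow (g x) s \<partial>M)" by (rule nn_integral_cmult) measurable
  finally show ?thesis using assms unfolding pint_def by (simp add: epow_mult epow_epow)
qed

lemma pint_SUP: assumes inc: "\<And>k x. g k x \<le> g (Suc k) x" and [measurable]: "\<And>k. g k \<in> borel_measurable M"
  and s: "s > 0"
  shows "pint M s (\<lambda>x. SUP k. g k x) = (SUP k::nat. pint M s (g k))"
proof -
  have "(\<integral>\<^sup>+x. epow (SUP k. g k x) s \<partial>M) = (\<integral>\<^sup>+x. (SUP k. epow (g k x) s) \<partial>M)"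
    using s by (simp add: epow_SUP)
  also have "\<dots> = (SUP k. \<integral>\<^sup>+x. epow (g k x) s \<partial>M)"
  proof (rule nn_integral_monotone_convergence_SUP)
    show "incseq (\<lambda>k x. epow (g k x) s)"
      using inc s by (intro incseq_SucI le_funI epow_mono) auto
  qed measurable
  finally show ?thesis unfolding pint_def using s by (simp add: epow_SUP)
qed

lemma pint_zero: assumes [measurable]: "g \<in> borel_measurable M" and s: "s > 0" and z: "pint M s g = 0"
  shows "AE x in M. g x = 0"
proof -
  have "(\<integral>\<^sup>+x. epow (g x) s \<partial>M) = 0" using z s unfolding pint_def by (simp add: epow_eq_0_iff)
  then have "AE x in M. epow (g x) s = 0" by (subst (asm) nn_integral_0_iff_AE) auto
  then show ?thesis using s by (auto elim!: eventually_mono simp: epow_eq_0_iff)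
qed

lemma pint_0: "s > 0 \<Longrightarrow> pint M s (\<lambda>x. 0) = 0"
  by (simp add: pint_def)

lemma pint_count_entry: assumes s: "s > 0" shows "g i \<le> pint (count_space UNIV) s g"
proof -
  have "epow (g i) s = (\<integral>\<^sup>+x. epow (g x) s * indicator {i} x \<partial>count_space UNIV)"
    by (subst nn_integral_indicator_finite) auto
  also have "\<dots> \<le> (\<integral>\<^sup>+x. epow (g x) s \<partial>count_space UNIV)"
    by (intro nn_integral_mono) (auto split: split_indicator)
  finally have "epow (epow (g i) s) (1/s) \<le> pint (count_space UNIV) s g"
    unfolding pint_def using s by (intro epow_mono) auto
  then show ?thesis using epow_epow[OF s] by simp
qed

lemma mink_pointwise:
  assumes s: "s \<ge> 1" and a: "a > 0" and b: "b > 0"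
  shows "epow (u + v) s \<le> ennreal ((a + b) powr (s - 1)) * (ennreal (a powr (1 - s)) * epow u s + ennreal (b powr (1 - s)) * epow v s)"
proof (cases "u = top \<or> v = top")
  case True
  have "ennreal (a powr (1 - s)) * top = top" "ennreal (b powr (1 - s)) * top = top"
    "ennreal ((a + b) powr (s - 1)) * top = top"
    using a b by (auto simp: ennreal_mult_top)
  then show ?thesis using True by auto
next
  case False
  then obtain x y where xy: "u = ennreal x" "v = ennreal y" "x \<ge> 0" "y \<ge> 0" by (metis ennreal_cases)
  have "(x + y) powr s \<le> (a + b) powr (s - 1) * (a powr (1 - s) * x powr s + b powr (1 - s) * y powr s)"
    by (rule mink_real[OF s a b xy(3,4)])
  then show ?thesis using xy a b
    by (simp add: epow_ennreal flip: ennreal_plus ennreal_mult)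
qed

lemma pint_add:
  assumes s: "s \<ge> 1" and [measurable]: "g \<in> borel_measurable M" "h \<in> borel_measurable M"
  shows "pint M s (\<lambda>x. g x + h x) \<le> pint M s g + pint M s h"
proof -
  have s0: "s > 0" using s by simp
  define A where "A = (\<integral>\<^sup>+x. epow (g x) s \<partial>M)"
  define B where "B = (\<integral>\<^sup>+x. epow (h x) s \<partial>M)"
  have pg: "pint M s g = epow A (1/s)" and ph: "pint M s h = epow B (1/s)"
    by (simp_all add: pint_def A_def B_def)
  show ?thesis
  proof (cases "A = top \<or> B = top")
    case True
    then show ?thesis using pg ph by auto
  next
    case False
    show ?thesis
    proof (cases "A = 0 \<or> B = 0")
      case True
      then show ?thesis
      proof
        assume "A = 0"
        then have "AE x in M. epow (g x) s = 0" unfolding A_def by (subst (asm) nn_integral_0_iff_AE) auto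
        then have "AE x in M. g x = 0" using s0 by (auto elim!: eventually_mono simp: epow_eq_0_iff)
        then have "pint M s (\<lambda>x. g x + h x) = pint M s h"
          unfolding pint_def by (intro arg_cong[where f="\<lambda>I. epow I (1/s)"] nn_integral_cong_AE) (auto elim!: eventually_mono)
        then show ?thesis by simp
      next
        assume "B = 0"
        then have "AE x in M. epow (h x) s = 0" unfolding B_def by (subst (asm) nn_integral_0_iff_AE) auto
        then have "AE x in M. h x = 0" using s0 by (auto elim!: eventually_mono simp: epow_eq_0_iff)
        then have "pint M s (\<lambda>x. g x + h x) = pint M s g"
          unfolding pint_def by (intro arg_cong[where f="\<lambda>I. epow I (1/s)"] nn_integral_cong_AE) (auto elim!: eventually_mono)
        then show ?thesis by simp
      qed
    next
      case False2: False
      obtain A' where A': "A = ennreal A'" "A' > 0"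
        using False False2 by (cases A rule: ennreal_cases) (auto simp: zero_less_iff_neq_zero)
      obtain B' where B': "B = ennreal B'" "B' > 0"
        using False False2 by (cases B rule: ennreal_cases) (auto simp: zero_less_iff_neq_zero)
      define a where "a = A' powr (1/s)"
      define b where "b = B' powr (1/s)"
      have a: "a > 0" and b: "b > 0" using A' B' by (auto simp: a_def b_def)
      have as: "a powr s = A'" "b powr s = B'" using A' B' s0 by (auto simp: a_def b_def powr_powr)
      have pga: "pint M s g = ennreal a" using pg A' by (simp add: epow_ennreal a_def)
      have phb: "pint M s h = ennreal b" using ph B' by (simp add: epow_ennreal b_def)
      define K where "K = (a + b) powr (s - 1)"
      define \<alpha> where "\<alpha> = a powr (1 - s)"
      define \<beta> where "\<beta> = b powr (1 - s)"
      have "(\<integral>\<^sup>+x. epow (g x + h x) s \<partial>M) \<le> (\<integral>\<^sup>+x. ennreal K * (ennreal \<alpha> * epow (g x) s + ennreal \<beta> * epow (h x) s) \<partial>M)"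
        unfolding K_def \<alpha>_def \<beta>_def by (intro nn_integral_mono mink_pointwise[OF s a b])
      also have "\<dots> = ennreal K * (ennreal \<alpha> * A + ennreal \<beta> * B)"
        unfolding A_def B_def by (simp add: nn_integral_cmult nn_integral_add)
      also have "\<dots> = ennreal (K * (\<alpha> * A' + \<beta> * B'))"
        using A' B' a b by (simp add: K_def \<alpha>_def \<beta>_def ennreal_mult ennreal_plus)
      also have "K * (\<alpha> * A' + \<beta> * B') = (a + b) powr s"
      proof -
        have "\<alpha> * A' = a" "\<beta> * B' = b" using a b
          by (simp_all add: \<alpha>_def \<beta>_def as[symmetric] powr_add[symmetric])
        then have "K * (\<alpha> * A' + \<beta> * B') = (a + b) powr (s - 1) * (a + b) powr 1" using a b by (simp add: K_def)
        also have "\<dots> = (a + b) powr s" using a b by (simp only: powr_add[symmetric]) simp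
        finally show ?thesis .
      qed
      finally have "pint M s (\<lambda>x. g x + h x) \<le> epow (ennreal ((a + b) powr s)) (1/s)"
        unfolding pint_def using s0 by (intro epow_mono) auto
      also have "\<dots> = ennreal (a + b)" using a b s0 by (simp add: epow_ennreal powr_powr)
      finally show ?thesis using pga phb by (simp add: ennreal_plus a b less_imp_le)
    qed
  qed
qed

definition pn :: "'a measure \<Rightarrow> ennreal \<Rightarrow> ('a \<Rightarrow> ennreal) \<Rightarrow> ennreal" where
  "pn M s g = (if s = top then ess M g else pint M (enn2real s) g)"

lemma enn2real_ge1: assumes "1 \<le> s" "s \<noteq> top" shows "1 \<le> enn2real s"
proof -
  obtain x where "s = ennreal x" "x \<ge> 0" using assms(2) by (cases s rule: ennreal_cases) auto
  then show ?thesis using assms(1) by (simp add: ennreal_le_iff2)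
qed

lemma pn_top: "pn M top g = ess M g" by (simp add: pn_def)
lemma pn_fin: "s \<noteq> top \<Longrightarrow> pn M s g = pint M (enn2real s) g" by (simp add: pn_def)

lemma pn_mono: assumes "1 \<le> s" "AE x in M. g x \<le> h x" shows "pn M s g \<le> pn M s h"
proof (cases "s = top")
  case True then show ?thesis using ess_mono[OF assms(2)] by (simp add: pn_top)
next
  case False
  then have "enn2real s > 0" using enn2real_ge1[OF assms(1)] by simp
  from pint_mono[OF assms(2) this] show ?thesis using False by (simp add: pn_fin)
qed

lemma pn_cong_AE: "1 \<le> s \<Longrightarrow> (AE x in M. g x = h x) \<Longrightarrow> pn M s g = pn M s h"
  by (intro antisym pn_mono) (auto elim: eventually_mono)

lemma pn_cmult: assumes "1 \<le> s" "g \<in> borel_measurable M" "c < top" shows "pn M s (\<lambda>x. c * g x) = c * pn M s g"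
proof (cases "s = top")
  case True then show ?thesis using ess_cmult[OF assms(3)] by (simp add: pn_top)
next
  case False
  then have "enn2real s > 0" using enn2real_ge1[OF assms(1)] by simp
  from pint_cmult[OF assms(2,3) this] show ?thesis using False by (simp add: pn_fin)
qed

lemma pn_add: assumes "1 \<le> s" "g \<in> borel_measurable M" "h \<in> borel_measurable M"
  shows "pn M s (\<lambda>x. g x + h x) \<le> pn M s g + pn M s h"
proof (cases "s = top")
  case True then show ?thesis using ess_add by (simp add: pn_top)
next
  case False
  then have "enn2real s \<ge> 1" using enn2real_ge1[OF assms(1)] by simp
  from pint_add[OF this assms(2,3)] show ?thesis using False by (simp add: pn_fin)
qed

lemma pn_SUP: assumes "1 \<le> s" "\<And>k x. g k x \<le> g (Suc k) x" "\<And>k. g k \<in> borel_measurable M"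
  shows "pn M s (\<lambda>x. SUP k. g k x) = (SUP k::nat. pn M s (g k))"
proof (cases "s = top")
  case True then show ?thesis using ess_SUP by (simp add: pn_top)
next
  case False
  then have "enn2real s > 0" using enn2real_ge1[OF assms(1)] by simp
  from pint_SUP[where g=g and M=M, OF assms(2,3) this] show ?thesis using False by (simp add: pn_fin)
qed

lemma pn_zero: assumes "1 \<le> s" "g \<in> borel_measurable M" "pn M s g = 0" shows "AE x in M. g x = 0"
proof (cases "s = top")
  case True then show ?thesis using assms ess_zero by (simp add: pn_top)
next
  case False
  then have "enn2real s > 0" using enn2real_ge1[OF assms(1)] by simp
  from pint_zero[OF assms(2) this] show ?thesis using False assms(3) by (simp add: pn_fin)
qed

lemma pn_0: assumes "1 \<le> s" shows "pn M s (\<lambda>x. 0) = 0"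
proof (cases "s = top")
  case True then show ?thesis using ess_const_le by (simp add: pn_top)
next
  case False
  then have "enn2real s > 0" using enn2real_ge1[OF assms(1)] by simp
  from pint_0[OF this] show ?thesis using False by (simp add: pn_fin)
qed

lemma pn_count_entry: assumes "1 \<le> s" shows "g i \<le> pn (count_space UNIV) s g"
proof (cases "s = top")
  case True then show ?thesis by (simp add: pn_top ess_count_space SUP_upper)
next
  case False
  then have "enn2real s > 0" using enn2real_ge1[OF assms(1)] by simp
  from pint_count_entry[OF this] show ?thesis using False by (simp add: pn_fin)
qed

lemma seq_norm_pn: "seq_norm r g = pn (count_space UNIV) r g"
  unfolding seq_norm_def pn_def pint_def by (simp add: ess_count_space)

lemma Lq_norm_pn: assumes "1 \<le> q"
  shows "Lq_norm q A f = pn lebesgue q (\<lambda>x. ennreal \<bar>f x\<bar> * indicator A x)"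
proof (cases "q = top")
  case True
  have "{c. AE x in lebesgue. x \<in> A \<longrightarrow> ennreal \<bar>f x\<bar> \<le> c} = {c. AE x in lebesgue. ennreal \<bar>f x\<bar> * indicator A x \<le> c}"
    by (auto split: split_indicator)
  then show ?thesis using True unfolding Lq_norm_def ess_def by (simp add: pn_top ess_def)
next
  case False
  then have q: "enn2real q \<ge> 1" using enn2real_ge1 assms by auto
  have "(\<lambda>x. ennreal (\<bar>f x\<bar> powr enn2real q) * indicator A x) = (\<lambda>x. epow (ennreal \<bar>f x\<bar> * indicator A x) (enn2real q))"
    using q by (auto simp: epow_ennreal split: split_indicator)
  then show ?thesis using False unfolding Lq_norm_def pn_fin[OF False] pint_def by simp
qed

lemma dyadic_cube_eq: "dyadic_cube v m = (\<Inter>i. {x. x $ i \<in> {2 powr real_of_int v * real_of_int (m $ i) <.. 2 powr real_of_int v * (real_of_int (m $ i) + 1)}})"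
  unfolding dyadic_cube_def by auto

lemma dyadic_cube_borel[measurable]: "dyadic_cube v m \<in> sets borel"
  unfolding dyadic_cube_eq by (intro sets.countable_INT') auto

lemma dyadic_cube_leb[measurable]: "dyadic_cube v m \<in> sets lebesgue"
  using dyadic_cube_borel by simp

definition cidx :: "int \<Rightarrow> real ^ 'n \<Rightarrow> int ^ 'n" where
  "cidx v x = (\<chi> i. \<lceil>x $ i / 2 powr real_of_int v\<rceil> - 1)"

lemma in_cube_cidx: "x \<in> dyadic_cube v (cidx v x)"
proof -
  have "2 powr real_of_int v * real_of_int (\<lceil>t / 2 powr real_of_int v\<rceil> - 1) < t \<and>
        t \<le> 2 powr real_of_int v * (real_of_int (\<lceil>t / 2 powr real_of_int v\<rceil> - 1) + 1)" for t
  proof -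
    let ?c = "2 powr real_of_int v"
    have c: "?c > 0" by simp
    have h: "real_of_int \<lceil>t / ?c\<rceil> - 1 < t / ?c" "t / ?c \<le> real_of_int \<lceil>t / ?c\<rceil>"
      by linarith+
    have "?c * (real_of_int \<lceil>t / ?c\<rceil> - 1) < ?c * (t / ?c)" using h(1) c by (rule mult_strict_left_mono)
    moreover have "?c * (t / ?c) \<le> ?c * real_of_int \<lceil>t / ?c\<rceil>" using h(2) c by (intro mult_left_mono) auto
    moreover have "?c * (t / ?c) = t" using c by simp
    ultimately show ?thesis by simp
  qed
  then show ?thesis unfolding dyadic_cube_def cidx_def by simp
qed

lemma cube_cidx: assumes "x \<in> dyadic_cube v m" shows "m = cidx v x"
proof -
  have "m $ i = \<lceil>x $ i / 2 powr real_of_int v\<rceil> - 1" for i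
  proof -
    let ?c = "2 powr real_of_int v"
    have c: "?c > 0" by simp
    have "?c * real_of_int (m $ i) < x $ i" "x $ i \<le> ?c * (real_of_int (m $ i) + 1)"
      using assms unfolding dyadic_cube_def by auto
    then have "real_of_int (m $ i) < x $ i / ?c" "x $ i / ?c \<le> real_of_int (m $ i) + 1"
      using c by (simp_all add: field_simps)
    then have "\<lceil>x $ i / ?c\<rceil> = m $ i + 1" by (intro ceiling_unique) auto
    then show ?thesis by simp
  qed
  then show ?thesis unfolding cidx_def by (simp add: vec_eq_iff)
qed

lemma dyadic_disjoint: "disjoint_family (dyadic_cube v)"
  unfolding disjoint_family_on_def using cube_cidx by blast

lemma finite_vector:
  fixes B :: "'n::finite \<Rightarrow> 'a set"
  assumes "\<And>i. finite (B i)"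
  shows "finite {V::'a^'n. \<forall>i. V $ i \<in> B i}"
proof -
  have "vec_nth ` {V::'a^'n. \<forall>i. V $ i \<in> B i} \<subseteq> Pi\<^sub>E UNIV B" by auto
  then have "finite (vec_nth ` {V::'a^'n. \<forall>i. V $ i \<in> B i})"
    using finite_PiE[of UNIV B] assms by (auto intro: finite_subset)
  then show ?thesis
    by (rule finite_imageD) (auto intro: inj_onI simp: vec_eq_iff)
qed

lemma bounded_cover:
  fixes K :: "(real ^ 'n) set"
  assumes "bounded K"
  shows "\<exists>S. finite S \<and> (\<forall>x\<in>K. cidx 0 x \<in> S)"
proof -
  obtain a where a: "\<forall>x\<in>K. norm x \<le> a" using assms bounded_iff by blast
  define N where "N = \<lceil>a\<rceil> + 1"
  let ?S = "{V::int^'n. \<forall>i. V $ i \<in> {-N..N}}"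
  have "finite ?S" by (rule finite_vector) simp
  moreover have "cidx 0 x \<in> ?S" if "x \<in> K" for x
  proof -
    have "\<bar>x $ i\<bar> \<le> a" for i using a that component_le_norm_cart[of x i] by force
    then have "\<lceil>x $ i\<rceil> - 1 \<in> {-N..N}" for i
    proof -
      have xa: "-a \<le> x $ i" "x $ i \<le> a" using \<open>\<And>i. \<bar>x $ i\<bar> \<le> a\<close>[of i] by auto
      have "\<lceil>x $ i\<rceil> \<le> \<lceil>a\<rceil>" using xa(2) by (rule ceiling_mono)
      moreover have "real_of_int \<lceil>x $ i\<rceil> \<ge> x $ i" by (rule le_of_int_ceiling)
      moreover have "real_of_int \<lceil>a\<rceil> \<ge> a" by (rule le_of_int_ceiling)
      ultimately have "real_of_int \<lceil>x $ i\<rceil> \<ge> - real_of_int \<lceil>a\<rceil>" using xa(1) by linarith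
      then have "\<lceil>x $ i\<rceil> \<ge> - \<lceil>a\<rceil>" by linarith
      with \<open>\<lceil>x $ i\<rceil> \<le> \<lceil>a\<rceil>\<close> show ?thesis unfolding N_def by simp
    qed
    then show ?thesis unfolding cidx_def by simp
  qed
  ultimately show ?thesis by blast
qed

lemma emeasure_dyadic_cube:
  "emeasure lebesgue (dyadic_cube v (m :: int^'n)) = ennreal ((2 powr real_of_int v) ^ CARD('n))"
proof -
  define l where "l = (\<chi> i. 2 powr real_of_int v * real_of_int (m $ i))"
  define u where "u = (\<chi> i. 2 powr real_of_int v * (real_of_int (m $ i) + 1))"
  have sub1: "box l u \<subseteq> dyadic_cube v m"
    unfolding dyadic_cube_def l_def u_def by (auto simp: mem_box_cart less_imp_le)
  have sub2: "dyadic_cube v m \<subseteq> cbox l u"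
  proof
    fix x assume "x \<in> dyadic_cube v m"
    then have "l $ i \<le> x $ i \<and> x $ i \<le> u $ i" for i unfolding dyadic_cube_def l_def u_def
      by (auto dest!: spec[where x=i])
    then show "x \<in> cbox l u" by (simp add: mem_box_cart)
  qed
  note sub = sub1 sub2
  have lu: "\<And>b. b \<in> Basis \<Longrightarrow> l \<bullet> b \<le> u \<bullet> b"
    unfolding l_def u_def by (auto simp: Basis_vec_def inner_axis)
  have P: "(\<Prod>b\<in>Basis. (u - l) \<bullet> b) = (2 powr real_of_int v) ^ CARD('n)"
  proof -
    have "(u - l) \<bullet> b = 2 powr real_of_int v" if "b \<in> Basis" for b
      using that unfolding l_def u_def by (auto simp: Basis_vec_def inner_axis algebra_simps)
    then have "(\<Prod>b\<in>Basis. (u - l) \<bullet> b) = (\<Prod>b\<in>(Basis :: (real^'n) set). 2 powr real_of_int v)"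
      by (intro prod.cong) auto
    also have "\<dots> = (2 powr real_of_int v) ^ CARD('n)" by simp
    finally show ?thesis .
  qed
  have e1: "emeasure lebesgue (box l u) = ennreal ((2 powr real_of_int v) ^ CARD('n))"
    using emeasure_lborel_box[OF lu] P by (simp add: emeasure_completion)
  have e2: "emeasure lebesgue (cbox l u) = ennreal ((2 powr real_of_int v) ^ CARD('n))"
    using emeasure_lborel_cbox[OF lu] P by (simp add: emeasure_completion)
  have "emeasure lebesgue (box l u) \<le> emeasure lebesgue (dyadic_cube v m)"
    by (intro emeasure_mono sub) measurable
  moreover have "emeasure lebesgue (dyadic_cube v m) \<le> emeasure lebesgue (cbox l u)"
    by (intro emeasure_mono sub) (simp add: lmeasurable_cbox fmeasurableD)
  ultimately show ?thesis using e1 e2 by simp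
qed

lemma measure_dyadic_cube:
  "measure lebesgue (dyadic_cube v (m :: int^'n)) = (2 powr real_of_int v) ^ CARD('n)"
  unfolding measure_def emeasure_dyadic_cube by simp

definition wt :: "ennreal \<Rightarrow> ennreal \<Rightarrow> int \<Rightarrow> int ^ 'n \<Rightarrow> ennreal" where
  "wt p q v m = ennreal (measure lebesgue (dyadic_cube v m) powr (enn2real (1 / p) - enn2real (1 / q)))"

definition lev :: "ennreal \<Rightarrow> ennreal \<Rightarrow> ennreal \<Rightarrow> (real ^ 'n \<Rightarrow> ennreal) \<Rightarrow> int \<Rightarrow> ennreal" where
  "lev p q r g v = pn (count_space UNIV) r (\<lambda>m::int^'n. wt p q v m * pn lebesgue q (\<lambda>x. g x * indicator (dyadic_cube v m) x))"

definition Np :: "ennreal \<Rightarrow> ennreal \<Rightarrow> ennreal \<Rightarrow> ennreal \<Rightarrow> (real ^ 'n \<Rightarrow> ennreal) \<Rightarrow> ennreal" where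
  "Np p \<tau> q r g = pn (count_space UNIV) \<tau> (lev p q r g)"

lemma BBM_eq: assumes "1 \<le> q" shows "BBM_norm p \<tau> q r f = Np p \<tau> q r (\<lambda>x. ennreal \<bar>f x\<bar>)"
  unfolding BBM_norm_def Np_def lev_def wt_def seq_norm_pn Lq_norm_pn[OF assms] ..

lemma count_meas[simp]: "f \<in> borel_measurable (count_space UNIV)" by simp

lemma wt0: "wt p q 0 m = 1"
  unfolding wt_def measure_dyadic_cube by simp

lemma wt_pos: "wt p q v m > 0"
  unfolding wt_def measure_dyadic_cube by simp

lemma wt_fin: "wt p q v m < top"
  unfolding wt_def by simp

context
  fixes p \<tau> q r :: ennreal
  assumes q1: "1 \<le> q" and r1: "1 \<le> r" and t1: "1 \<le> \<tau>"
begin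

lemma Np_mono: assumes "AE x in lebesgue. g x \<le> h x" shows "Np p \<tau> q r g \<le> Np p \<tau> q r h"
proof -
  have "pn lebesgue q (\<lambda>x. g x * indicator (dyadic_cube v m) x) \<le> pn lebesgue q (\<lambda>x. h x * indicator (dyadic_cube v m) x)" for v m
    using assms by (intro pn_mono[OF q1]) (auto elim!: eventually_mono intro: mult_right_mono)
  then have "lev p q r g v \<le> lev p q r h v" for v
    unfolding lev_def by (intro pn_mono[OF r1] AE_I2 mult_left_mono) auto
  then show ?thesis unfolding Np_def by (intro pn_mono[OF t1] AE_I2) auto
qed

lemma Np_add: assumes [measurable]: "g \<in> borel_measurable lebesgue" "h \<in> borel_measurable lebesgue"
  shows "Np p \<tau> q r (\<lambda>x. g x + h x) \<le> Np p \<tau> q r g + Np p \<tau> q r h"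
proof -
  have "pn lebesgue q (\<lambda>x. (g x + h x) * indicator (dyadic_cube v m) x) \<le>
     pn lebesgue q (\<lambda>x. g x * indicator (dyadic_cube v m) x) + pn lebesgue q (\<lambda>x. h x * indicator (dyadic_cube v m) x)" for v m
    unfolding distrib_right by (rule pn_add[OF q1]) measurable
  then have "wt p q v m * pn lebesgue q (\<lambda>x. (g x + h x) * indicator (dyadic_cube v m) x) \<le>
     wt p q v m * pn lebesgue q (\<lambda>x. g x * indicator (dyadic_cube v m) x) + wt p q v m * pn lebesgue q (\<lambda>x. h x * indicator (dyadic_cube v m) x)" for v m
    unfolding distrib_left[symmetric] by (rule mult_left_mono) auto
  then have "lev p q r (\<lambda>x. g x + h x) v \<le> lev p q r g v + lev p q r h v" for v
    unfolding lev_def by (intro order_trans[OF pn_mono[OF r1] pn_add[OF r1]] AE_I2) auto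
  then show ?thesis unfolding Np_def by (intro order_trans[OF pn_mono[OF t1] pn_add[OF t1]] AE_I2) auto
qed

lemma Np_cmult: assumes [measurable]: "g \<in> borel_measurable lebesgue" and c: "c < top"
  shows "Np p \<tau> q r (\<lambda>x. c * g x) = c * Np p \<tau> q r g"
proof -
  have "pn lebesgue q (\<lambda>x. c * g x * indicator (dyadic_cube v m) x) = c * pn lebesgue q (\<lambda>x. g x * indicator (dyadic_cube v m) x)" for v m
    unfolding mult.assoc by (rule pn_cmult[OF q1 _ c]) measurable
  then have "lev p q r (\<lambda>x. c * g x) = (\<lambda>v. c * lev p q r g v)"
    unfolding lev_def by (simp add: mult.left_commute pn_cmult[OF r1 _ c])
  then show ?thesis unfolding Np_def by (simp add: pn_cmult[OF t1 _ c])
qed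

lemma Np_SUP: assumes inc: "\<And>k x. g k x \<le> g (Suc k) x" and [measurable]: "\<And>k. g k \<in> borel_measurable lebesgue"
  shows "Np p \<tau> q r (\<lambda>x. SUP k. g k x) = (SUP k::nat. Np p \<tau> q r (g k))"
proof -
  have mono3: "pn lebesgue q (\<lambda>x. g k x * indicator (dyadic_cube v m) x) \<le> pn lebesgue q (\<lambda>x. g (Suc k) x * indicator (dyadic_cube v m) x)"
    for k v m using inc by (intro pn_mono[OF q1] AE_I2 mult_right_mono) auto
  have mono2: "lev p q r (g k) v \<le> lev p q r (g (Suc k)) v" for k v
    using mono3 unfolding lev_def by (intro pn_mono[OF r1] AE_I2 mult_left_mono) auto
  have mono1: "Np p \<tau> q r (g k) \<le> Np p \<tau> q r (g (Suc k))" for k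
    using inc by (intro Np_mono AE_I2) auto
  note mono = mono1 mono2 mono3
  have "pn lebesgue q (\<lambda>x. (SUP k. g k x) * indicator (dyadic_cube v m) x) = (SUP k. pn lebesgue q (\<lambda>x. g k x * indicator (dyadic_cube v m) x))" for v m
  proof -
    have "pn lebesgue q (\<lambda>x. (SUP k. g k x) * indicator (dyadic_cube v m) x) = pn lebesgue q (\<lambda>x. SUP k. g k x * indicator (dyadic_cube v m) x)"
      by (simp add: SUP_mult_right_ennreal)
    also have "\<dots> = (SUP k. pn lebesgue q (\<lambda>x. g k x * indicator (dyadic_cube v m) x))"
      using inc by (intro pn_SUP[OF q1]) (auto intro: mult_right_mono)
    finally show ?thesis .
  qed
  then have "lev p q r (\<lambda>x. SUP k. g k x) v = (SUP k. lev p q r (g k) v)" for v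
    unfolding lev_def using mono
    by (simp add: SUP_mult_left_ennreal pn_SUP[OF r1] mult_left_mono)
  then have L: "lev p q r (\<lambda>x. SUP k. g k x) = (\<lambda>v. SUP k. lev p q r (g k) v)" by (rule ext)
  show ?thesis unfolding Np_def L by (rule pn_SUP[where g="\<lambda>k. lev p q r (g k)", OF t1 mono2]) simp
qed

lemma Np_entry: "wt p q v m * pn lebesgue q (\<lambda>x. g x * indicator (dyadic_cube v m) x) \<le> Np p \<tau> q r g"
proof -
  have "wt p q v m * pn lebesgue q (\<lambda>x. g x * indicator (dyadic_cube v m) x) \<le> lev p q r g v"
    unfolding lev_def by (rule pn_count_entry[OF r1])
  also have "\<dots> \<le> Np p \<tau> q r g" unfolding Np_def by (rule pn_count_entry[OF t1])
  finally show ?thesis .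
qed

lemma Np_entry0: "pn lebesgue q (\<lambda>x. g x * indicator (dyadic_cube 0 m) x) \<le> Np p \<tau> q r g"
  using Np_entry[where v=0 and m=m and g=g] by (simp add: wt0)

lemma Np_zero: assumes [measurable]: "g \<in> borel_measurable lebesgue" and z: "Np p \<tau> q r g = 0"
  shows "AE x in lebesgue. g x = 0"
proof -
  have "\<forall>m. AE x in lebesgue. g x * indicator (dyadic_cube 0 m) x = 0"
  proof
    fix m
    have "pn lebesgue q (\<lambda>x. g x * indicator (dyadic_cube 0 m) x) = 0"
      using Np_entry0[where m=m and g=g] z by simp
    then show "AE x in lebesgue. g x * indicator (dyadic_cube 0 m) x = 0"
      by (rule pn_zero[OF q1, rotated]) measurable
  qed
  then have "AE x in lebesgue. \<forall>m. g x * indicator (dyadic_cube 0 m) x = 0"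
    by (rule AE_all_countable[THEN iffD2])
  then show ?thesis
  proof (rule eventually_mono)
    fix x assume "\<forall>m. g x * indicator (dyadic_cube 0 m) x = 0"
    then have "g x * indicator (dyadic_cube 0 (cidx 0 x)) x = 0" by blast
    then show "g x = 0" using in_cube_cidx[of x 0] by simp
  qed
qed

end

lemma real_young: fixes a y s :: real assumes "a > 0" "y \<ge> 0" "s \<ge> 1"
  shows "y \<le> a + a powr (1 - s) * y powr s"
proof (cases "y \<le> a")
  case True
  have "0 \<le> a powr (1 - s) * y powr s" by simp
  then show ?thesis using True by linarith
next
  case False
  then have ya: "y > a" by simp
  have "a powr (s - 1) \<le> y powr (s - 1)" using assms ya by (intro powr_mono2) auto
  then have "a powr (1 - s) * (y * a powr (s - 1)) \<le> a powr (1 - s) * (y * y powr (s - 1))"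
    using assms ya by (intro mult_left_mono) auto
  moreover have "a powr (1 - s) * (y * a powr (s - 1)) = y"
    using assms by (simp add: mult.left_commute powr_add[symmetric])
  moreover have "y * y powr (s - 1) = y powr s"
  proof -
    have y0: "y > 0" using assms ya by simp
    have "y powr s = y powr ((s - 1) + 1)" by simp
    also have "\<dots> = y powr (s - 1) * y powr 1" by (rule powr_add)
    finally show ?thesis using y0 by simp
  qed
  ultimately show ?thesis using assms by simp
qed

lemma int_le_2pn:
  fixes Q :: "'a::euclidean_space set"
  assumes q1: "1 \<le> q" and Q[measurable]: "Q \<in> sets lebesgue" and mQ: "emeasure lebesgue Q = 1"
    and [measurable]: "g \<in> borel_measurable lebesgue"
  shows "(\<integral>\<^sup>+x. g x * indicator Q x \<partial>lebesgue) \<le> 2 * pn lebesgue q (\<lambda>x. g x * indicator Q x)"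
proof -
  define G where "G x = g x * indicator Q x" for x
  have [measurable]: "G \<in> borel_measurable lebesgue" unfolding G_def by measurable
  have G0: "x \<notin> Q \<Longrightarrow> G x = 0" for x by (simp add: G_def)
  define A where "A = pn lebesgue q G"
  have "(\<integral>\<^sup>+x. G x \<partial>lebesgue) \<le> 2 * A"
  proof (cases "q = top")
    case True
    then have "AE x in lebesgue. G x \<le> A" unfolding A_def using AE_le_ess by (simp add: pn_top)
    then have "(\<integral>\<^sup>+x. G x \<partial>lebesgue) \<le> (\<integral>\<^sup>+x. A * indicator Q x \<partial>lebesgue)"
      by (intro nn_integral_mono_AE) (auto elim!: eventually_mono simp: G0 split: split_indicator)
    also have "\<dots> = A" by (subst nn_integral_cmult_indicator[OF Q]) (simp add: mQ)
    also have "A \<le> 2 * A" by (simp add: mult_2)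
    finally show ?thesis .
  next
    case False
    define s where "s = enn2real q"
    have s1: "s \<ge> 1" unfolding s_def using enn2real_ge1[OF q1 False] .
    have As: "A = epow (\<integral>\<^sup>+x. epow (G x) s \<partial>lebesgue) (1/s)"
      unfolding A_def pn_fin[OF False] pint_def s_def ..
    show ?thesis
    proof (cases "A = top")
      case True then show ?thesis by (simp add: ennreal_mult_top)
    next
      case Atop: False
      show ?thesis
      proof (cases "A = 0")
        case True
        then have "AE x in lebesgue. G x = 0" unfolding A_def by (intro pn_zero[OF q1]) auto
        then have "(\<integral>\<^sup>+x. G x \<partial>lebesgue) = 0" by (simp add: nn_integral_0_iff_AE)
        then show ?thesis by simp
      next
        case False
        then obtain a where a: "A = ennreal a" "a > 0" using Atop
          by (cases A rule: ennreal_cases) (auto simp: zero_less_iff_neq_zero)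
        have I: "(\<integral>\<^sup>+x. epow (G x) s \<partial>lebesgue) = ennreal (a powr s)"
        proof -
          have "(\<integral>\<^sup>+x. epow (G x) s \<partial>lebesgue) = epow (epow (\<integral>\<^sup>+x. epow (G x) s \<partial>lebesgue) (1/s)) s"
            using epow_epow[of "1/s"] s1 by simp
          also have "\<dots> = epow A s" using As by simp
          finally show ?thesis using a by (simp add: epow_ennreal)
        qed
        have pw: "G x \<le> ennreal a * indicator Q x + ennreal (a powr (1 - s)) * epow (G x) s" for x
        proof (cases "x \<in> Q")
          case False then show ?thesis by (simp add: G0)
        next
          case True
          show ?thesis
          proof (cases "G x = top")
            case True
            have "ennreal (a powr (1 - s)) * top = top" using a by (simp add: ennreal_mult_top)
            then show ?thesis using True by simp
          next
            case False
            then obtain y where y: "G x = ennreal y" "y \<ge> 0" by (cases "G x" rule: ennreal_cases) auto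
            have "y \<le> a + a powr (1 - s) * y powr s" using real_young[OF a(2) y(2) s1] .
            then show ?thesis using y True a by (simp add: epow_ennreal flip: ennreal_mult ennreal_plus)
          qed
        qed
        have "(\<integral>\<^sup>+x. G x \<partial>lebesgue) \<le> (\<integral>\<^sup>+x. ennreal a * indicator Q x + ennreal (a powr (1 - s)) * epow (G x) s \<partial>lebesgue)"
          by (intro nn_integral_mono pw)
        also have "\<dots> = ennreal a * emeasure lebesgue Q + ennreal (a powr (1 - s)) * ennreal (a powr s)"
          by (simp add: nn_integral_add nn_integral_cmult I)
        also have "\<dots> = ennreal (a + a powr (1 - s) * a powr s)"
          using mQ a by (simp flip: ennreal_mult ennreal_plus)
        also have "a + a powr (1 - s) * a powr s = 2 * a" using a by (simp add: powr_add[symmetric])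
        also have "ennreal (2 * a) = 2 * A" using a by (simp add: ennreal_mult)
        finally show ?thesis .
      qed
    qed
  qed
  then show ?thesis unfolding G_def A_def .
qed

lemma pn_sum: assumes s: "1 \<le> s" and fin: "finite S" and meas: "\<And>i. i \<in> S \<Longrightarrow> f i \<in> borel_measurable M"
  shows "pn M s (\<lambda>x. \<Sum>i\<in>S. f i x) \<le> (\<Sum>i\<in>S. pn M s (f i))"
  using fin meas
proof (induction S rule: finite_induct)
  case empty
  then show ?case using pn_0[OF s] by simp
next
  case (insert i S)
  have [measurable]: "f i \<in> borel_measurable M" "(\<lambda>x. \<Sum>i\<in>S. f i x) \<in> borel_measurable M"
    using insert.prems by (auto intro!: borel_measurable_sum)
  have "pn M s (\<lambda>x. \<Sum>j\<in>insert i S. f j x) = pn M s (\<lambda>x. f i x + (\<Sum>j\<in>S. f j x))"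
    using insert.hyps by simp
  also have "\<dots> \<le> pn M s (f i) + pn M s (\<lambda>x. \<Sum>j\<in>S. f j x)"
    by (rule pn_add[OF s]) measurable
  also have "\<dots> \<le> pn M s (f i) + (\<Sum>j\<in>S. pn M s (f j))"
    using insert by (intro add_left_mono) auto
  finally show ?case using insert.hyps by simp
qed

lemma emeasure_cube0: "emeasure lebesgue (dyadic_cube 0 (m::int^'n)) = 1"
  by (simp add: emeasure_dyadic_cube)

lemma cover_le_sum:
  fixes K :: "(real^'n) set" and g :: "real^'n \<Rightarrow> ennreal"
  assumes S: "finite S" "\<forall>x\<in>K. cidx 0 x \<in> S"
  shows "g x * indicator K x \<le> (\<Sum>m\<in>S. g x * indicator (dyadic_cube 0 m) x)"
proof (cases "x \<in> K")
  case True
  then have "cidx 0 x \<in> S" using S by blast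
  then have "g x * indicator (dyadic_cube 0 (cidx 0 x)) x \<le> (\<Sum>m\<in>S. g x * indicator (dyadic_cube 0 m) x)"
    using S by (intro member_le_sum[where f="\<lambda>m. g x * indicator (dyadic_cube 0 m) x"]) auto
  then show ?thesis using True in_cube_cidx[of x 0] by simp
qed simp

context
  fixes p \<tau> q r :: ennreal
  assumes q1: "1 \<le> q" and r1: "1 \<le> r" and t1: "1 \<le> \<tau>"
begin

lemma local_int:
  fixes K :: "(real^'n) set"
  assumes "bounded K"
  shows "\<exists>C::real. \<forall>g \<in> borel_measurable lebesgue. (\<integral>\<^sup>+x. g x * indicator K x \<partial>lebesgue) \<le> ennreal C * Np p \<tau> q r g"
proof -
  obtain S where S: "finite S" "\<forall>x\<in>K. cidx 0 x \<in> S" using bounded_cover[OF assms] by blast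
  have "(\<integral>\<^sup>+x. g x * indicator K x \<partial>lebesgue) \<le> ennreal (2 * real (card S)) * Np p \<tau> q r g"
    if [measurable]: "g \<in> borel_measurable lebesgue" for g
  proof -
    have "(\<integral>\<^sup>+x. g x * indicator K x \<partial>lebesgue) \<le> (\<integral>\<^sup>+x. (\<Sum>m\<in>S. g x * indicator (dyadic_cube 0 m) x) \<partial>lebesgue)"
      by (intro nn_integral_mono cover_le_sum[OF S])
    also have "\<dots> = (\<Sum>m\<in>S. \<integral>\<^sup>+x. g x * indicator (dyadic_cube 0 m) x \<partial>lebesgue)"
      by (rule nn_integral_sum) measurable
    also have "\<dots> \<le> (\<Sum>m\<in>S. 2 * Np p \<tau> q r g)"
    proof (rule sum_mono)
      fix m assume "m \<in> S"
      have "(\<integral>\<^sup>+x. g x * indicator (dyadic_cube 0 m) x \<partial>lebesgue) \<le> 2 * pn lebesgue q (\<lambda>x. g x * indicator (dyadic_cube 0 m) x)"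
        by (rule int_le_2pn[OF q1 _ emeasure_cube0]) measurable
      also have "\<dots> \<le> 2 * Np p \<tau> q r g"
        by (intro mult_left_mono Np_entry0[OF q1 r1 t1]) auto
      finally show "(\<integral>\<^sup>+x. g x * indicator (dyadic_cube 0 m) x \<partial>lebesgue) \<le> 2 * Np p \<tau> q r g" .
    qed
    also have "\<dots> = ennreal (2 * real (card S)) * Np p \<tau> q r g"
      by (simp add: ennreal_mult ennreal_of_nat_eq_real_of_nat mult.commute mult.left_commute)
    finally show ?thesis .
  qed
  then show ?thesis by blast
qed

lemma local_Lq:
  fixes K :: "(real^'n) set"
  assumes "bounded K"
  shows "\<exists>C::real. \<forall>g \<in> borel_measurable lebesgue. pn lebesgue q (\<lambda>x. g x * indicator K x) \<le> ennreal C * Np p \<tau> q r g"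
proof -
  obtain S where S: "finite S" "\<forall>x\<in>K. cidx 0 x \<in> S" using bounded_cover[OF assms] by blast
  have "pn lebesgue q (\<lambda>x. g x * indicator K x) \<le> ennreal (real (card S)) * Np p \<tau> q r g"
    if [measurable]: "g \<in> borel_measurable lebesgue" for g
  proof -
    have "pn lebesgue q (\<lambda>x. g x * indicator K x) \<le> pn lebesgue q (\<lambda>x. \<Sum>m\<in>S. g x * indicator (dyadic_cube 0 m) x)"
      by (intro pn_mono[OF q1] AE_I2 cover_le_sum[OF S])
    also have "\<dots> \<le> (\<Sum>m\<in>S. pn lebesgue q (\<lambda>x. g x * indicator (dyadic_cube 0 m) x))"
      by (rule pn_sum[OF q1 S(1)]) measurable
    also have "\<dots> \<le> (\<Sum>m\<in>S. Np p \<tau> q r g)"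
      by (intro sum_mono Np_entry0[OF q1 r1 t1])
    also have "\<dots> = ennreal (real (card S)) * Np p \<tau> q r g"
      by (simp add: ennreal_of_nat_eq_real_of_nat)
    finally show ?thesis .
  qed
  then show ?thesis by blast
qed

end

lemma int_decode_bound: "k \<le> 2 * nat \<bar>int_decode k\<bar>"
  unfolding int_decode_def sum_decode_def by (auto split: if_splits)

lemma geom_int_finite:
  fixes \<rho> :: real assumes "0 \<le> \<rho>" "\<rho> < 1"
  shows "(\<integral>\<^sup>+v. ennreal (\<rho> ^ nat \<bar>v::int\<bar>) \<partial>count_space UNIV) < top"
proof -
  define \<sigma> where "\<sigma> = sqrt \<rho>"
  have \<sigma>: "0 \<le> \<sigma>" "\<sigma> < 1" "\<rho> = \<sigma>^2" using assms by (auto simp: \<sigma>_def)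
  have "(\<integral>\<^sup>+v. ennreal (\<rho> ^ nat \<bar>v::int\<bar>) \<partial>count_space UNIV) = (\<integral>\<^sup>+k. ennreal (\<rho> ^ nat \<bar>int_decode (k::nat)\<bar>) \<partial>count_space UNIV)"
    by (rule nn_integral_bij_count_space[symmetric]) (rule bij_int_decode)
  also have "\<dots> \<le> (\<integral>\<^sup>+k. ennreal (\<sigma> ^ (k::nat)) \<partial>count_space UNIV)"
  proof (rule nn_integral_mono)
    fix k :: nat
    have "\<rho> ^ nat \<bar>int_decode k\<bar> = \<sigma> ^ (2 * nat \<bar>int_decode k\<bar>)" using \<sigma> by (simp add: power_mult)
    also have "\<dots> \<le> \<sigma> ^ k" using \<sigma> int_decode_bound[of k] by (intro power_decreasing) auto
    finally show "ennreal (\<rho> ^ nat \<bar>int_decode k\<bar>) \<le> ennreal (\<sigma> ^ k)" by (rule ennreal_leI)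
  qed
  also have "\<dots> = (\<Sum>k. ennreal (\<sigma> ^ k))" by (rule nn_integral_count_space_nat)
  also have "\<dots> = ennreal (\<Sum>k. \<sigma> ^ k)" using \<sigma> by (intro suminf_ennreal2) auto
  finally show ?thesis by (simp add: le_less_trans)
qed

lemma powr_split: fixes x t :: real assumes "x \<ge> 0" shows "x powr t = x powr (t - 1) * x"
proof (cases "x = 0")
  case True then show ?thesis by simp
next
  case False
  have "x powr t = x powr ((t - 1) + 1)" by simp
  also have "\<dots> = x powr (t - 1) * x powr 1" by (rule powr_add)
  finally show ?thesis using False assms by simp
qed

lemma pow_sum_bound:
  fixes y :: "'i \<Rightarrow> real"
  assumes t: "t \<ge> 1" and M: "M > 0" and y: "\<And>m. 0 \<le> y m" "\<And>m. y m \<le> M"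
    and S: "(\<integral>\<^sup>+m. ennreal (y m) \<partial>count_space UNIV) = ennreal \<mu>" and mu: "\<mu> \<ge> 0"
  shows "(\<integral>\<^sup>+m. ennreal (y m powr t) \<partial>count_space UNIV) \<le> ennreal (M powr (t - 1) * \<mu>)"
proof -
  have pw: "y m powr t \<le> M powr (t - 1) * y m" for m
  proof (cases "y m = 0")
    case True then show ?thesis using t by simp
  next
    case False
    then have ym: "y m > 0" using y(1)[of m] by simp
    have "y m powr t = y m powr (t - 1) * y m" using y(1) by (rule powr_split)
    also have "\<dots> \<le> M powr (t - 1) * y m" using ym y(2)[of m] t by (simp add: mult_right_mono powr_mono2)
    finally show ?thesis .
  qed
  have "(\<integral>\<^sup>+m. ennreal (y m powr t) \<partial>count_space UNIV) \<le> (\<integral>\<^sup>+m. ennreal (M powr (t - 1)) * ennreal (y m) \<partial>count_space UNIV)"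
    using pw y by (intro nn_integral_mono) (simp add: ennreal_mult[symmetric] ennreal_leI)
  also have "\<dots> = ennreal (M powr (t - 1)) * ennreal \<mu>" by (simp add: nn_integral_cmult S)
  finally show ?thesis by (simp add: ennreal_mult mu)
qed

lemma lev_fin_bound:
  fixes y :: "'i \<Rightarrow> real"
  assumes rr: "rr \<ge> 1" and Qi: "Qi > 0" and t: "Qi * rr \<ge> 1" and W: "W > 0" and M: "M > 0"
    and y: "\<And>m. 0 \<le> y m" "\<And>m. y m \<le> M"
    and S: "(\<integral>\<^sup>+m. ennreal (y m) \<partial>count_space UNIV) = ennreal \<mu>" and mu: "\<mu> \<ge> 0"
  shows "pint (count_space UNIV) rr (\<lambda>m. ennreal (W * y m powr Qi)) \<le> ennreal ((W powr rr * (M powr (Qi * rr - 1) * \<mu>)) powr (1/rr))"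
proof -
  have e: "epow (ennreal (W * y m powr Qi)) rr = ennreal (W powr rr) * ennreal (y m powr (Qi * rr))" for m
    using W y(1)[of m] by (subst epow_ennreal) (auto simp: powr_mult powr_powr ennreal_mult)
  have "(\<integral>\<^sup>+m. epow (ennreal (W * y m powr Qi)) rr \<partial>count_space UNIV) = ennreal (W powr rr) * (\<integral>\<^sup>+m. ennreal (y m powr (Qi * rr)) \<partial>count_space UNIV)"
    unfolding e by (simp add: nn_integral_cmult)
  also have "\<dots> \<le> ennreal (W powr rr) * ennreal (M powr (Qi * rr - 1) * \<mu>)"
    by (intro mult_left_mono pow_sum_bound[OF t M y S mu]) auto
  also have "\<dots> = ennreal (W powr rr * (M powr (Qi * rr - 1) * \<mu>))" by (simp add: ennreal_mult mu)
  finally have "pint (count_space UNIV) rr (\<lambda>m. ennreal (W * y m powr Qi)) \<le> epow (ennreal (W powr rr * (M powr (Qi * rr - 1) * \<mu>))) (1/rr)"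
    unfolding pint_def using rr by (intro epow_mono) auto
  also have "\<dots> = ennreal ((W powr rr * (M powr (Qi * rr - 1) * \<mu>)) powr (1/rr))"
    using mu by (simp add: epow_ennreal)
  finally show ?thesis .
qed

lemma alg1:
  fixes D \<mu> P Qi rr :: real
  assumes D: "D > 0" and mu: "\<mu> > 0" and rr: "rr \<ge> 1"
  shows "((D powr (P - Qi)) powr rr * (D powr (Qi * rr - 1) * \<mu>)) powr (1/rr) = D powr (P - 1/rr) * \<mu> powr (1/rr)"
proof -
  have "(D powr (P - Qi)) powr rr * D powr (Qi * rr - 1) = D powr (P * rr - 1)"
    using D by (simp add: powr_powr powr_add[symmetric] algebra_simps)
  then have h1: "(D powr (P - Qi)) powr rr * (D powr (Qi * rr - 1) * \<mu>) = D powr (P * rr - 1) * \<mu>"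
    by (simp only: mult.assoc[symmetric])
  have h2: "(D powr (P * rr - 1) * \<mu>) powr (1/rr) = D powr (P - 1/rr) * \<mu> powr (1/rr)"
    using D mu rr by (simp add: powr_mult powr_powr divide_simps)
  show ?thesis unfolding h1 by (rule h2)
qed

lemma alg2:
  fixes D \<mu> P Qi rr :: real
  assumes D: "D > 0" and mu: "\<mu> > 0" and rr: "rr \<ge> 1"
  shows "((D powr (P - Qi)) powr rr * (\<mu> powr (Qi * rr - 1) * \<mu>)) powr (1/rr) = D powr (P - Qi) * \<mu> powr Qi"
proof -
  have "\<mu> powr (Qi * rr - 1) * \<mu> = \<mu> powr (Qi * rr)"
    using mu by (simp add: powr_split[of \<mu> "Qi * rr"])
  then show ?thesis
    using D mu rr by (simp add: powr_mult powr_powr)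
qed

lemma epow_1_base[simp]: "epow 1 s = 1" by (simp add: epow_def)

lemma enn2real_inv: assumes "1 \<le> x" shows "enn2real (1 / x) = (if x = top then 0 else 1 / enn2real x)"
proof (cases "x = top")
  case True then show ?thesis by simp
next
  case False
  then obtain y where y: "x = ennreal y" "y \<ge> 0" by (cases x rule: ennreal_cases) auto
  then have "y \<ge> 1" using assms by (simp add: ennreal_le_iff2)
  then have "1 / x = ennreal (1 / y)" using y divide_ennreal[of 1 y] by simp
  then show ?thesis using y \<open>y \<ge> 1\<close> by simp
qed

definition Dv :: "nat \<Rightarrow> int \<Rightarrow> real" where "Dv N v = (2 powr real_of_int v) ^ N"

lemma Dv_pos: "Dv N v > 0" by (simp add: Dv_def)

lemma Dv_eq: "Dv N v = 2 powr (real_of_int v * real N)"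
  unfolding Dv_def by (simp add: powr_realpow[symmetric] powr_powr)

lemma wt_eq: "wt p q v (m :: int^'n) = ennreal (Dv CARD('n) v powr (enn2real (1/p) - enn2real (1/q)))"
  unfolding wt_def measure_dyadic_cube Dv_def ..

context
  fixes E :: "(real^'n) set" and \<mu> :: real
  assumes E[measurable]: "E \<in> sets lebesgue" and mE: "emeasure lebesgue E = ennreal \<mu>" and mu: "\<mu> > 0"
begin

definition xm :: "int \<Rightarrow> int^'n \<Rightarrow> real" where "xm v m = measure lebesgue (E \<inter> dyadic_cube v m)"

lemma xm_emeasure: "emeasure lebesgue (E \<inter> dyadic_cube v m) = ennreal (xm v m)"
proof -
  have "emeasure lebesgue (E \<inter> dyadic_cube v m) \<le> emeasure lebesgue E" by (intro emeasure_mono) auto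
  then have "emeasure lebesgue (E \<inter> dyadic_cube v m) < top" using mE by (simp add: le_less_trans)
  then show ?thesis unfolding xm_def by (simp add: emeasure_eq_ennreal_measure)
qed

lemma xm_nonneg: "0 \<le> xm v m" unfolding xm_def by simp

lemma xm_le_mu: "xm v m \<le> \<mu>"
proof -
  have "emeasure lebesgue (E \<inter> dyadic_cube v m) \<le> emeasure lebesgue E" by (intro emeasure_mono) auto
  then show ?thesis using mE mu by (simp add: xm_emeasure)
qed

lemma xm_le_D: "xm v m \<le> Dv CARD('n) v"
proof -
  have "emeasure lebesgue (E \<inter> dyadic_cube v m) \<le> emeasure lebesgue (dyadic_cube v m)" by (intro emeasure_mono) auto
  then show ?thesis using Dv_pos[of "CARD('n)" v] by (simp add: xm_emeasure emeasure_dyadic_cube Dv_def)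
qed

lemma xm_sum: "(\<integral>\<^sup>+m. ennreal (xm v m) \<partial>count_space UNIV) = ennreal \<mu>"
proof -
  have "(\<Union>m. E \<inter> dyadic_cube v m) = E" using in_cube_cidx by blast
  then have "ennreal \<mu> = emeasure lebesgue (\<Union>m\<in>UNIV. E \<inter> dyadic_cube v m)" using mE by simp
  also have "\<dots> = (\<integral>\<^sup>+m. emeasure lebesgue (E \<inter> dyadic_cube v m) \<partial>count_space UNIV)"
    by (rule emeasure_UN_countable) (auto simp: disjoint_family_on_def dest: cube_cidx)
  finally show ?thesis by (simp add: xm_emeasure)
qed

lemma inner_ind: assumes q1: "1 \<le> q" and qt: "q \<noteq> top"
  shows "pn lebesgue q (\<lambda>x. indicator E x * indicator (dyadic_cube v m) x) = ennreal (xm v m powr (1 / enn2real q))"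
proof -
  have q0: "enn2real q > 0" using enn2real_ge1[OF q1 qt] by simp
  have "(\<lambda>x. epow (indicator E x * indicator (dyadic_cube v m) x) (enn2real q)) = indicator (E \<inter> dyadic_cube v m)"
    using q0 by (auto simp: fun_eq_iff split: split_indicator)
  then have "(\<integral>\<^sup>+x. epow (indicator E x * indicator (dyadic_cube v m) x) (enn2real q) \<partial>lebesgue) = ennreal (xm v m)"
    by (simp add: xm_emeasure)
  then show ?thesis unfolding pn_fin[OF qt] pint_def by (simp add: epow_ennreal xm_nonneg)
qed

lemma lev_bounds:
  fixes p q r :: ennreal
  assumes q1: "1 \<le> q" and qt: "q \<noteq> top" and qr: "q \<le> r"
  defines "P \<equiv> enn2real (1/p)" and "R \<equiv> enn2real (1/r)" and "Qi \<equiv> enn2real (1/q)"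
  shows "lev p q r (indicator E) v \<le> ennreal (Dv CARD('n) v powr (P - R) * \<mu> powr R)
       \<and> lev p q r (indicator E) v \<le> ennreal (Dv CARD('n) v powr (P - Qi) * \<mu> powr Qi)"
proof -
  let ?D = "Dv CARD('n) v"
  define W where "W = ?D powr (P - Qi)"
  have W: "W > 0" unfolding W_def using Dv_pos[of "CARD('n)" v] by simp
  have qq: "enn2real q \<ge> 1" using enn2real_ge1[OF q1 qt] .
  have Qi: "Qi = 1 / enn2real q" unfolding Qi_def using enn2real_inv[OF q1] qt by simp
  have Qi0: "Qi > 0" using Qi qq by simp
  have r1: "1 \<le> r" using q1 qr by simp
  have ent: "wt p q v m * pn lebesgue q (\<lambda>x. indicator E x * indicator (dyadic_cube v m) x) = ennreal (W * xm v m powr Qi)" for m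
    unfolding wt_eq inner_ind[OF q1 qt] W_def P_def[symmetric] Qi_def[symmetric] Qi[symmetric]
    using Dv_pos by (simp add: ennreal_mult)
  have lev: "lev p q r (indicator E) v = pn (count_space UNIV) r (\<lambda>m. ennreal (W * xm v m powr Qi))"
    unfolding lev_def ent ..
  show ?thesis
  proof (cases "r = top")
    case True
    then have R0: "R = 0" unfolding R_def by simp
    have levS: "lev p q r (indicator E) v = (SUP m. ennreal (W * xm v m powr Qi))"
      using lev True by (simp add: pn_top ess_count_space)
    have b: "lev p q r (indicator E) v \<le> ennreal (W * M powr Qi)" if "\<And>m. xm v m \<le> M" for M
      unfolding levS
    proof (rule SUP_least, rule ennreal_leI)
      fix m
      show "W * xm v m powr Qi \<le> W * M powr Qi"
        using W Qi0 that[of m] xm_nonneg[of v m] by (intro mult_left_mono powr_mono2) auto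
    qed
    have "W * ?D powr Qi = ?D powr (P - R) * \<mu> powr R"
      unfolding W_def R0 using Dv_pos mu by (simp add: powr_add[symmetric])
    then show ?thesis using b[OF xm_le_D] b[OF xm_le_mu] unfolding W_def by simp
  next
    case False
    define rr where "rr = enn2real r"
    have rr1: "rr \<ge> 1" unfolding rr_def using enn2real_ge1[OF r1 False] .
    have R: "R = 1 / rr" unfolding R_def rr_def using enn2real_inv[OF r1] False by simp
    have "enn2real q \<le> rr" unfolding rr_def using qr False by (intro enn2real_mono) (auto simp: top.not_eq_extremum)
    then have "Qi * enn2real q \<le> Qi * rr" using Qi0 by (intro mult_left_mono) auto
    moreover have "Qi * enn2real q = 1" using Qi qq by simp
    ultimately have t: "Qi * rr \<ge> 1" by simp
    have levP: "lev p q r (indicator E) v = pint (count_space UNIV) rr (\<lambda>m. ennreal (W * xm v m powr Qi))"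
      unfolding lev pn_fin[OF False] rr_def ..
    have b1: "lev p q r (indicator E) v \<le> ennreal ((W powr rr * (?D powr (Qi * rr - 1) * \<mu>)) powr (1/rr))"
      unfolding levP using mu
      by (intro lev_fin_bound[OF rr1 Qi0 t W Dv_pos xm_nonneg xm_le_D xm_sum]) auto
    have b2: "lev p q r (indicator E) v \<le> ennreal ((W powr rr * (\<mu> powr (Qi * rr - 1) * \<mu>)) powr (1/rr))"
      unfolding levP using mu
      by (intro lev_fin_bound[OF rr1 Qi0 t W mu xm_nonneg xm_le_mu xm_sum]) auto
    show ?thesis using b1 b2 unfolding W_def alg1[OF Dv_pos mu rr1] alg2[OF Dv_pos mu rr1] R by simp
  qed
qed

end

lemma Dv_powr: "Dv N v powr a = 2 powr (real_of_int v * real N * a)"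
  unfolding Dv_eq by (simp add: powr_powr)

lemma inv_mono: fixes a b :: ennreal assumes a1: "1 \<le> a" and ab: "a \<le> b"
  shows "enn2real (1/b) \<le> enn2real (1/a)"
proof (cases "b = top")
  case True then show ?thesis by simp
next
  case False
  then have at: "a \<noteq> top" using ab by (auto simp: top_unique)
  have "1 \<le> enn2real a" using enn2real_ge1[OF a1 at] .
  moreover have "enn2real a \<le> enn2real b" using ab False by (intro enn2real_mono) (auto simp: top.not_eq_extremum)
  ultimately show ?thesis using enn2real_inv[OF a1] enn2real_inv[of b] a1 ab at False
    by (simp add: frac_le)
qed

lemma inv_strict: fixes a b :: ennreal assumes a1: "1 \<le> a" and ab: "a < b"
  shows "enn2real (1/b) < enn2real (1/a)"
proof -
  have at: "a \<noteq> top" using ab by auto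
  have a1': "1 \<le> enn2real a" using enn2real_ge1[OF a1 at] .
  show ?thesis
  proof (cases "b = top")
    case True then show ?thesis using enn2real_inv[OF a1] at a1' by simp
  next
    case False
    obtain x y where xy: "a = ennreal x" "b = ennreal y" "x \<ge> 0" "y \<ge> 0" using at False
      by (metis ennreal_cases)
    have "x < y" using ab xy by (simp add: ennreal_less_iff)
    then have "enn2real a < enn2real b" using xy by simp
    then show ?thesis using enn2real_inv[OF a1] enn2real_inv[of b] a1 ab at False a1'
      by (simp add: frac_less2)
  qed
qed

lemma lev_bound_top:
  fixes E :: "(real^'n) set" and p q r :: ennreal
  assumes E: "E \<in> sets lebesgue" and mE: "emeasure lebesgue E = ennreal \<mu>" and mu: "\<mu> > 0"
    and q1: "1 \<le> q" and qt: "q \<noteq> top" and qp: "q \<le> p" and pr: "p \<le> r"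
  shows "lev p q r (indicator E) v \<le> ennreal (\<mu> powr enn2real (1/r) + \<mu> powr enn2real (1/q))"
proof -
  define P where "P = enn2real (1/p)"
  define R where "R = enn2real (1/r)"
  define Qi where "Qi = enn2real (1/q)"
  have p1: "1 \<le> p" and r1: "1 \<le> r" using q1 qp pr by auto
  have PQ: "P \<le> Qi" unfolding P_def Qi_def using inv_mono[OF q1 qp] .
  have RP: "R \<le> P" unfolding P_def R_def using inv_mono[OF p1 pr] .
  have B: "lev p q r (indicator E) v \<le> ennreal (Dv CARD('n) v powr (P - R) * \<mu> powr R)"
          "lev p q r (indicator E) v \<le> ennreal (Dv CARD('n) v powr (P - Qi) * \<mu> powr Qi)"
    using lev_bounds[OF E mE mu q1 qt order_trans[OF qp pr], where v=v and p=p] unfolding P_def R_def Qi_def by auto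
  show ?thesis
  proof (cases "v \<le> 0")
    case True
    have "real_of_int v * real CARD('n) \<le> 0" using True by (simp add: mult_nonpos_nonneg)
    then have "real_of_int v * real CARD('n) * (P - R) \<le> 0" using RP by (simp add: mult_nonpos_nonneg)
    then have "2 powr (real_of_int v * real CARD('n) * (P - R)) \<le> 2 powr 0" by (intro powr_mono) auto
    then have "Dv CARD('n) v powr (P - R) \<le> 1" unfolding Dv_powr by simp
    then have "Dv CARD('n) v powr (P - R) * \<mu> powr R \<le> \<mu> powr R" using mu by (simp add: mult_left_le_one_le)
    also have "\<dots> \<le> \<mu> powr R + \<mu> powr Qi" by simp
    finally show ?thesis using B(1) unfolding R_def Qi_def by (meson ennreal_leI order_trans)
  next
    case False
    have "0 \<le> real_of_int v * real CARD('n)" using False by simp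
    then have "2 powr 0 \<le> 2 powr (real_of_int v * real CARD('n))" by (intro powr_mono) auto
    then have "Dv CARD('n) v powr (P - Qi) \<le> Dv CARD('n) v powr 0"
      using False PQ by (intro powr_mono) (auto simp: Dv_eq)
    then have "Dv CARD('n) v powr (P - Qi) \<le> 1" using Dv_pos[of "CARD('n)" v] by simp
    then have "Dv CARD('n) v powr (P - Qi) * \<mu> powr Qi \<le> \<mu> powr Qi" using mu by (simp add: mult_left_le_one_le)
    also have "\<dots> \<le> \<mu> powr R + \<mu> powr Qi" by simp
    finally show ?thesis using B(2) unfolding R_def Qi_def by (meson ennreal_leI order_trans)
  qed
qed

lemma lev_bound_decay:
  fixes E :: "(real^'n) set" and p q r :: ennreal
  assumes E: "E \<in> sets lebesgue" and mE: "emeasure lebesgue E = ennreal \<mu>" and mu: "\<mu> > 0"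
    and q1: "1 \<le> q" and qp: "q < p" and pr: "p < r"
  defines "\<gamma> \<equiv> min (enn2real (1/p) - enn2real (1/r)) (enn2real (1/q) - enn2real (1/p))"
  shows "lev p q r (indicator E) v \<le> ennreal ((\<mu> powr enn2real (1/r) + \<mu> powr enn2real (1/q)) * (2 powr (- (real CARD('n) * \<gamma>))) ^ nat \<bar>v\<bar>)"
proof -
  define P where "P = enn2real (1/p)"
  define R where "R = enn2real (1/r)"
  define Qi where "Qi = enn2real (1/q)"
  define N where "N = real CARD('n)"
  have p1: "1 \<le> p" and r1: "1 \<le> r" using q1 qp pr by auto
  have qt: "q \<noteq> top" using qp by auto
  have PQ: "P < Qi" unfolding P_def Qi_def using inv_strict[OF q1 qp] .
  have RP: "R < P" unfolding P_def R_def using inv_strict[OF p1 pr] .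
  have g: "\<gamma> \<le> P - R" "\<gamma> \<le> Qi - P" unfolding \<gamma>_def P_def R_def Qi_def by auto
  have N: "N \<ge> 0" unfolding N_def by simp
  have B: "lev p q r (indicator E) v \<le> ennreal (Dv CARD('n) v powr (P - R) * \<mu> powr R)"
          "lev p q r (indicator E) v \<le> ennreal (Dv CARD('n) v powr (P - Qi) * \<mu> powr Qi)"
    using lev_bounds[OF E mE mu q1 qt order_trans[OF less_imp_le[OF qp] less_imp_le[OF pr]], where v=v and p=p]
    unfolding P_def R_def Qi_def by auto
  have rho: "(2 powr (- (N * \<gamma>))) ^ nat \<bar>v\<bar> = 2 powr (- (\<bar>real_of_int v\<bar> * N * \<gamma>))"
  proof -
    have "(2 powr (- (N * \<gamma>))) ^ nat \<bar>v\<bar> = (2 powr (- (N * \<gamma>))) powr (real (nat \<bar>v\<bar>))"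
      by (rule powr_realpow[symmetric]) simp
    also have "real (nat \<bar>v\<bar>) = \<bar>real_of_int v\<bar>" by simp
    also have "(2 powr (- (N * \<gamma>))) powr \<bar>real_of_int v\<bar> = 2 powr (- (\<bar>real_of_int v\<bar> * N * \<gamma>))"
      by (simp add: powr_powr algebra_simps)
    finally show ?thesis .
  qed
  let ?C = "\<mu> powr R + \<mu> powr Qi"
  show ?thesis
  proof (cases "v \<le> 0")
    case True
    have "real_of_int v * N * (P - R) \<le> - (\<bar>real_of_int v\<bar> * N * \<gamma>)"
    proof -
      have "\<bar>real_of_int v\<bar> * N * \<gamma> \<le> \<bar>real_of_int v\<bar> * N * (P - R)"
        using g N by (intro mult_left_mono) auto
      moreover have "real_of_int v = - \<bar>real_of_int v\<bar>" using True by simp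
      ultimately show ?thesis by (metis minus_mult_left neg_le_iff_le)
    qed
    then have "Dv CARD('n) v powr (P - R) \<le> (2 powr (- (N * \<gamma>))) ^ nat \<bar>v\<bar>"
      unfolding rho Dv_powr by (intro powr_mono) (auto simp: N_def)
    then have "Dv CARD('n) v powr (P - R) * \<mu> powr R \<le> (2 powr (- (N * \<gamma>))) ^ nat \<bar>v\<bar> * \<mu> powr R"
      by (intro mult_right_mono) auto
    also have "\<dots> \<le> (2 powr (- (N * \<gamma>))) ^ nat \<bar>v\<bar> * ?C" by (intro mult_left_mono) auto
    finally have "Dv CARD('n) v powr (P - R) * \<mu> powr R \<le> ?C * (2 powr (- (N * \<gamma>))) ^ nat \<bar>v\<bar>"
      by (simp only: mult.commute)
    then have "lev p q r (indicator E) v \<le> ennreal (?C * (2 powr (- (N * \<gamma>))) ^ nat \<bar>v\<bar>)"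
      using B(1) by (meson ennreal_leI order_trans)
    then show ?thesis unfolding R_def Qi_def N_def .
  next
    case False
    have "real_of_int v * N * (P - Qi) \<le> - (\<bar>real_of_int v\<bar> * N * \<gamma>)"
    proof -
      have "\<bar>real_of_int v\<bar> * N * \<gamma> \<le> \<bar>real_of_int v\<bar> * N * (Qi - P)"
        using g N by (intro mult_left_mono) auto
      moreover have "real_of_int v = \<bar>real_of_int v\<bar>" using False by simp
      ultimately show ?thesis by (simp add: algebra_simps)
    qed
    then have "Dv CARD('n) v powr (P - Qi) \<le> (2 powr (- (N * \<gamma>))) ^ nat \<bar>v\<bar>"
      unfolding rho Dv_powr by (intro powr_mono) (auto simp: N_def)
    then have "Dv CARD('n) v powr (P - Qi) * \<mu> powr Qi \<le> (2 powr (- (N * \<gamma>))) ^ nat \<bar>v\<bar> * \<mu> powr Qi"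
      by (intro mult_right_mono) auto
    also have "\<dots> \<le> (2 powr (- (N * \<gamma>))) ^ nat \<bar>v\<bar> * ?C" by (intro mult_left_mono) auto
    finally have "Dv CARD('n) v powr (P - Qi) * \<mu> powr Qi \<le> ?C * (2 powr (- (N * \<gamma>))) ^ nat \<bar>v\<bar>"
      by (simp only: mult.commute)
    then have "lev p q r (indicator E) v \<le> ennreal (?C * (2 powr (- (N * \<gamma>))) ^ nat \<bar>v\<bar>)"
      using B(2) by (meson ennreal_leI order_trans)
    then show ?thesis unfolding R_def Qi_def N_def .
  qed
qed

lemma Np_ind_finite:
  fixes E :: "(real^'n) set" and p q r \<tau> :: ennreal
  assumes hyp: "(1 \<le> q \<and> q < p \<and> p < r \<and> 1 \<le> \<tau> \<and> \<tau> < top)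
         \<or> (1 \<le> q \<and> q \<le> p \<and> p \<le> r \<and> \<tau> = top)"
    and E[measurable]: "E \<in> sets lebesgue" and mE: "emeasure lebesgue E = ennreal \<mu>" and mu: "\<mu> > 0"
  shows "Np p \<tau> q r (indicator E) < top"
proof -
  have q1: "1 \<le> q" and qp: "q \<le> p" and pr: "p \<le> r" and t1: "1 \<le> \<tau>" using hyp by auto
  show ?thesis
  proof (cases "q = top")
    case True
    then have pt: "p = top" "r = top" "\<tau> = top" using hyp qp pr by (auto simp: top_unique)
    have "lev p q r (indicator E) v \<le> 1" for v
    proof -
      have "wt p q v m * pn lebesgue q (\<lambda>x. indicator E x * indicator (dyadic_cube v m) x) \<le> 1" for m
      proof -
        have "wt p q v m = 1" unfolding wt_eq using True pt Dv_pos[of "CARD('n)" v] by simp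
        moreover have "ess lebesgue (\<lambda>x. indicator E x * indicator (dyadic_cube v m) x) \<le> 1"
          by (intro ess_le AE_I2) (auto split: split_indicator)
        ultimately show ?thesis using True by (simp add: pn_top)
      qed
      then show ?thesis unfolding lev_def using pt by (simp add: pn_top ess_count_space SUP_least)
    qed
    then have "Np p \<tau> q r (indicator E) \<le> 1" unfolding Np_def using pt by (simp add: pn_top ess_count_space SUP_least)
    then show ?thesis by (simp add: le_less_trans)
  next
    case qt: False
    show ?thesis
    proof (cases "\<tau> = top")
      case True
      have "Np p \<tau> q r (indicator E) \<le> ennreal (\<mu> powr enn2real (1/r) + \<mu> powr enn2real (1/q))"
        unfolding Np_def True pn_top ess_count_space
        by (intro SUP_least lev_bound_top[OF E mE mu q1 qt qp pr])
      then show ?thesis by (simp add: le_less_trans)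
    next
      case False
      then have qp': "q < p" and pr': "p < r" using hyp by auto
      define \<gamma> where "\<gamma> = min (enn2real (1/p) - enn2real (1/r)) (enn2real (1/q) - enn2real (1/p))"
      define C where "C = \<mu> powr enn2real (1/r) + \<mu> powr enn2real (1/q)"
      define \<rho>0 where "\<rho>0 = 2 powr (- (real CARD('n) * \<gamma>))"
      define tt where "tt = enn2real \<tau>"
      have p1: "1 \<le> p" using q1 qp by simp
      have g: "\<gamma> > 0" unfolding \<gamma>_def using inv_strict[OF q1 qp'] inv_strict[OF p1 pr'] by simp
      have tt: "tt \<ge> 1" unfolding tt_def using enn2real_ge1[OF t1 False] .
      have C: "C \<ge> 0" unfolding C_def by simp
      have "real CARD('n) * \<gamma> > 0" using g by simp
      then have "2 powr (- (real CARD('n) * \<gamma>)) < 2 powr 0" by (intro powr_less_mono) auto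
      then have r0: "0 < \<rho>0" "\<rho>0 < 1" unfolding \<rho>0_def by auto
      define \<rho> where "\<rho> = \<rho>0 powr tt"
      have "\<rho>0 powr tt < 1 powr tt" using r0 tt by (intro powr_less_mono2) auto
      then have r: "0 \<le> \<rho>" "\<rho> < 1" unfolding \<rho>_def by auto
      have lb: "lev p q r (indicator E) v \<le> ennreal (C * \<rho>0 ^ nat \<bar>v\<bar>)" for v
        unfolding C_def \<rho>0_def \<gamma>_def by (rule lev_bound_decay[OF E mE mu q1 qp' pr'])
      have pw: "epow (lev p q r (indicator E) v) tt \<le> ennreal (C powr tt) * ennreal (\<rho> ^ nat \<bar>v\<bar>)" for v
      proof -
        have "epow (lev p q r (indicator E) v) tt \<le> epow (ennreal (C * \<rho>0 ^ nat \<bar>v\<bar>)) tt"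
          using tt by (intro epow_mono lb) auto
        also have "\<dots> = ennreal ((C * \<rho>0 ^ nat \<bar>v\<bar>) powr tt)" using C r0 by (simp add: epow_ennreal)
        also have "(C * \<rho>0 ^ nat \<bar>v\<bar>) powr tt = C powr tt * \<rho> ^ nat \<bar>v\<bar>"
        proof -
          have "\<rho>0 ^ nat \<bar>v\<bar> = \<rho>0 powr real (nat \<bar>v\<bar>)"
            by (rule powr_realpow[symmetric, OF r0(1)])
          then have "(\<rho>0 ^ nat \<bar>v\<bar>) powr tt = (\<rho>0 powr real (nat \<bar>v\<bar>)) powr tt" by (rule arg_cong)
          also have "\<dots> = (\<rho>0 powr tt) powr real (nat \<bar>v\<bar>)" by (simp add: powr_powr mult.commute)
          also have "\<dots> = \<rho> ^ nat \<bar>v\<bar>" unfolding \<rho>_def using r0 by (intro powr_realpow) simp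
          finally show ?thesis using C r0 by (simp add: powr_mult)
        qed
        finally show ?thesis using C r by (simp add: ennreal_mult)
      qed
      have "(\<integral>\<^sup>+v. epow (lev p q r (indicator E) v) tt \<partial>count_space UNIV) \<le> (\<integral>\<^sup>+v. ennreal (C powr tt) * ennreal (\<rho> ^ nat \<bar>v::int\<bar>) \<partial>count_space UNIV)"
        by (intro nn_integral_mono pw)
      also have "\<dots> = ennreal (C powr tt) * (\<integral>\<^sup>+v. ennreal (\<rho> ^ nat \<bar>v::int\<bar>) \<partial>count_space UNIV)"
        by (simp add: nn_integral_cmult)
      also have "\<dots> < top" using geom_int_finite[OF r] by (simp add: ennreal_mult_less_top)
      finally have "(\<integral>\<^sup>+v. epow (lev p q r (indicator E) v) tt \<partial>count_space UNIV) \<noteq> top" by simp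
      then have "epow (\<integral>\<^sup>+v. epow (lev p q r (indicator E) v) tt \<partial>count_space UNIV) (1/tt) \<noteq> top"
        by (simp add: epow_eq_top_iff)
      then show ?thesis unfolding Np_def pn_fin[OF False] pint_def tt_def[symmetric]
        by (simp add: top.not_eq_extremum)
    qed
  qed
qed

lemma ennreal_abs_ind: "(\<lambda>x. ennreal \<bar>indicator A x :: real\<bar>) = indicator A"
  by (auto simp: fun_eq_iff split: split_indicator)

context
  fixes p \<tau> q r :: ennreal
  assumes q1: "1 \<le> q" and r1: "1 \<le> r" and t1: "1 \<le> \<tau>"
begin

abbreviation "NN \<equiv> Np p \<tau> q r"

lemma NN_0: "NN (\<lambda>x. 0) = 0"
  using Np_cmult[OF q1 r1 t1, of "\<lambda>x. 0" 0] by simp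

lemma NN_cong_AE: "(AE x in lebesgue. g x = h x) \<Longrightarrow> NN g = NN h"
  by (intro antisym Np_mono[OF q1 r1 t1]) (auto elim: eventually_mono)

lemma NN_sum: assumes fin: "finite S" and meas: "\<And>i. i \<in> S \<Longrightarrow> h i \<in> borel_measurable lebesgue"
  shows "NN (\<lambda>x. \<Sum>i\<in>S. h i x) \<le> (\<Sum>i\<in>S. NN (h i))"
  using fin meas
proof (induction S rule: finite_induct)
  case empty
  then show ?case using NN_0 by simp
next
  case (insert i S)
  have [measurable]: "h i \<in> borel_measurable lebesgue" "(\<lambda>x. \<Sum>i\<in>S. h i x) \<in> borel_measurable lebesgue"
    using insert.prems by (auto intro!: borel_measurable_sum)
  have "NN (\<lambda>x. \<Sum>j\<in>insert i S. h j x) = NN (\<lambda>x. h i x + (\<Sum>j\<in>S. h j x))"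
    using insert.hyps by simp
  also have "\<dots> \<le> NN (h i) + NN (\<lambda>x. \<Sum>j\<in>S. h j x)"
    by (rule Np_add[OF q1 r1 t1]) measurable
  also have "\<dots> \<le> NN (h i) + (\<Sum>j\<in>S. NN (h j))"
    using insert by (intro add_left_mono) auto
  finally show ?case using insert.hyps by simp
qed

lemma NN_fin_imp_Lq_loc:
  fixes f :: "real^'n \<Rightarrow> real"
  assumes [measurable]: "f \<in> borel_measurable lebesgue" and fin: "NN (\<lambda>x. ennreal \<bar>f x\<bar>) < top"
  shows "Lq_loc q f"
  unfolding Lq_loc_def
proof (intro conjI allI impI)
  show "f \<in> borel_measurable lebesgue" by fact
  fix K :: "(real^'n) set" assume "compact K"
  then obtain C :: real where C: "\<forall>g \<in> borel_measurable lebesgue. pn lebesgue q (\<lambda>x. g x * indicator K x) \<le> ennreal C * NN g"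
    using local_Lq[OF q1 r1 t1 compact_imp_bounded] by blast
  have "Lq_norm q K f = pn lebesgue q (\<lambda>x. ennreal \<bar>f x\<bar> * indicator K x)" by (rule Lq_norm_pn[OF q1])
  also have "\<dots> \<le> ennreal C * NN (\<lambda>x. ennreal \<bar>f x\<bar>)" using C by simp
  also have "\<dots> < top" using fin by (simp add: ennreal_mult_less_top)
  finally show "Lq_norm q K f < top" .
qed

lemma BBM_space_iff: "f \<in> borel_measurable lebesgue \<Longrightarrow> f \<in> BBM_space p \<tau> q r \<longleftrightarrow> BBM_norm p \<tau> q r f < top"
  unfolding BBM_space_def BBM_eq[OF q1] using NN_fin_imp_Lq_loc by auto

lemma BBM_space_meas: "BBM_space p \<tau> q r \<subseteq> borel_measurable lebesgue"
  unfolding BBM_space_def Lq_loc_def by auto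

end

context
  fixes p \<tau> q r :: ennreal
  assumes q1: "1 \<le> q" and r1: "1 \<le> r" and t1: "1 \<le> \<tau>"
begin

lemma part_homog: fixes f :: "real^'n \<Rightarrow> real" assumes [measurable]: "f \<in> borel_measurable lebesgue"
  shows "BBM_norm p \<tau> q r (\<lambda>x. c * f x) = ennreal \<bar>c\<bar> * BBM_norm p \<tau> q r f"
proof -
  have "(\<lambda>x. ennreal \<bar>c * f x\<bar>) = (\<lambda>x. ennreal \<bar>c\<bar> * ennreal \<bar>f x\<bar>)"
    by (simp add: abs_mult ennreal_mult)
  then show ?thesis unfolding BBM_eq[OF q1] by (simp add: Np_cmult[OF q1 r1 t1])
qed

lemma part_a: fixes f :: "real^'n \<Rightarrow> real" assumes [measurable]: "f \<in> borel_measurable lebesgue"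
  and z: "BBM_norm p \<tau> q r f = 0" shows "AE x in lebesgue. f x = 0"
proof -
  have "AE x in lebesgue. ennreal \<bar>f x\<bar> = 0"
    using z unfolding BBM_eq[OF q1] by (intro Np_zero[OF q1 r1 t1]) auto
  then show ?thesis by (auto elim!: eventually_mono)
qed

lemma part_b: fixes f g :: "real^'n \<Rightarrow> real"
  assumes "AE x in lebesgue. \<bar>g x\<bar> \<le> \<bar>f x\<bar>" shows "BBM_norm p \<tau> q r g \<le> BBM_norm p \<tau> q r f"
  unfolding BBM_eq[OF q1] using assms by (intro Np_mono[OF q1 r1 t1]) (auto elim!: eventually_mono intro: ennreal_leI)

lemma part_e: fixes f g :: "real^'n \<Rightarrow> real"
  assumes [measurable]: "f \<in> borel_measurable lebesgue" "g \<in> borel_measurable lebesgue"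
  shows "BBM_norm p \<tau> q r (\<lambda>x. f x + g x) \<le> BBM_norm p \<tau> q r f + BBM_norm p \<tau> q r g"
proof -
  have "Np p \<tau> q r (\<lambda>x. ennreal \<bar>f x + g x\<bar>) \<le> Np p \<tau> q r (\<lambda>x. ennreal \<bar>f x\<bar> + ennreal \<bar>g x\<bar>)"
    by (intro Np_mono[OF q1 r1 t1] AE_I2) (simp add: ennreal_plus[symmetric] ennreal_leI del: ennreal_plus)
  also have "\<dots> \<le> Np p \<tau> q r (\<lambda>x. ennreal \<bar>f x\<bar>) + Np p \<tau> q r (\<lambda>x. ennreal \<bar>g x\<bar>)"
    by (rule Np_add[OF q1 r1 t1]) measurable
  finally show ?thesis unfolding BBM_eq[OF q1] .
qed

lemma part_f: fixes c :: "real^'n" and rr :: real shows "\<exists>C::real. \<forall>f \<in> BBM_space p \<tau> q r.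
        (\<integral>\<^sup>+ x. ennreal \<bar>f x\<bar> * indicator (ball c rr) x \<partial>lebesgue) \<le> ennreal C * BBM_norm p \<tau> q r f"
proof -
  obtain C :: real where C: "\<forall>g \<in> borel_measurable lebesgue. (\<integral>\<^sup>+x. g x * indicator (ball c rr) x \<partial>lebesgue) \<le> ennreal C * Np p \<tau> q r g"
    using local_int[OF q1 r1 t1, of "ball c rr"] by auto
  show ?thesis
  proof (intro exI ballI)
    fix f :: "real^'n \<Rightarrow> real" assume "f \<in> BBM_space p \<tau> q r"
    then have [measurable]: "f \<in> borel_measurable lebesgue" using BBM_space_meas[OF q1 r1 t1] by auto
    show "(\<integral>\<^sup>+ x. ennreal \<bar>f x\<bar> * indicator (ball c rr) x \<partial>lebesgue) \<le> ennreal C * BBM_norm p \<tau> q r f"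
      unfolding BBM_eq[OF q1] using C by simp
  qed
qed

lemma part_c:
  fixes F :: "nat \<Rightarrow> real^'n \<Rightarrow> real" and f :: "real^'n \<Rightarrow> real"
  assumes meas[measurable]: "\<And>k. F k \<in> borel_measurable lebesgue" and fm[measurable]: "f \<in> borel_measurable lebesgue"
    and mono: "\<forall>k. AE x in lebesgue. 0 \<le> F k x \<and> F k x \<le> F (Suc k) x"
    and lim: "AE x in lebesgue. (\<lambda>k. F k x) \<longlonglongrightarrow> f x"
  shows "incseq (\<lambda>k. BBM_norm p \<tau> q r (F k)) \<and> (\<lambda>k. BBM_norm p \<tau> q r (F k)) \<longlonglongrightarrow> BBM_norm p \<tau> q r f"
proof -
  have inc: "incseq (\<lambda>k. BBM_norm p \<tau> q r (F k))"
  proof (rule incseq_SucI)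
    fix k show "BBM_norm p \<tau> q r (F k) \<le> BBM_norm p \<tau> q r (F (Suc k))"
    proof (rule part_b)
      have "AE x in lebesgue. 0 \<le> F k x \<and> F k x \<le> F (Suc k) x" using mono by blast
      then show "AE x in lebesgue. \<bar>F k x\<bar> \<le> \<bar>F (Suc k) x\<bar>" by (rule eventually_mono) auto
    qed
  qed
  define H where "H k x = (SUP j\<in>{..k}. ennreal \<bar>F j x\<bar>)" for k x
  have Hm[measurable]: "H k \<in> borel_measurable lebesgue" for k unfolding H_def by measurable
  have Hinc: "H k x \<le> H (Suc k) x" for k x unfolding H_def by (rule SUP_subset_mono) auto
  have good: "AE x in lebesgue. (\<forall>k. 0 \<le> F k x \<and> F k x \<le> F (Suc k) x) \<and> (\<lambda>k. F k x) \<longlonglongrightarrow> f x"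
  proof -
    have "AE x in lebesgue. \<forall>k. 0 \<le> F k x \<and> F k x \<le> F (Suc k) x"
      by (rule AE_all_countable[THEN iffD2]) (use mono in blast)
    then show ?thesis using lim by (rule eventually_conj)
  qed
  have Hk: "AE x in lebesgue. \<forall>k. H k x = ennreal \<bar>F k x\<bar>"
    using good
  proof (rule eventually_mono, intro allI)
    fix x k assume gx: "(\<forall>k. 0 \<le> F k x \<and> F k x \<le> F (Suc k) x) \<and> (\<lambda>k. F k x) \<longlonglongrightarrow> f x"
    have sm: "\<And>n. F n x \<le> F (Suc n) x" and nn: "\<And>n. 0 \<le> F n x" using gx by blast+
    have le: "j \<le> k \<Longrightarrow> F j x \<le> F k x" for j using lift_Suc_mono_le[of "\<lambda>k. F k x", OF sm] by blast
    show "H k x = ennreal \<bar>F k x\<bar>" unfolding H_def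
    proof (rule antisym)
      show "(SUP j\<in>{..k}. ennreal \<bar>F j x\<bar>) \<le> ennreal \<bar>F k x\<bar>"
      proof (rule SUP_least)
        fix j assume "j \<in> {..k}"
        then have "F j x \<le> F k x" using le by simp
        then have "\<bar>F j x\<bar> \<le> \<bar>F k x\<bar>" using nn[of j] nn[of k] by simp
        then show "ennreal \<bar>F j x\<bar> \<le> ennreal \<bar>F k x\<bar>" by (rule ennreal_leI)
      qed
      show "ennreal \<bar>F k x\<bar> \<le> (SUP j\<in>{..k}. ennreal \<bar>F j x\<bar>)" by (rule SUP_upper) auto
    qed
  qed
  have Hsup: "AE x in lebesgue. (SUP k. H k x) = ennreal \<bar>f x\<bar>"
    using good Hk
  proof (rule eventually_mono[OF eventually_conj])
    fix x assume gx: "((\<forall>k. 0 \<le> F k x \<and> F k x \<le> F (Suc k) x) \<and> (\<lambda>k. F k x) \<longlonglongrightarrow> f x) \<and> (\<forall>k. H k x = ennreal \<bar>F k x\<bar>)"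
    have "incseq (\<lambda>k. H k x)" using Hinc by (intro incseq_SucI) auto
    then have "(\<lambda>k. H k x) \<longlonglongrightarrow> (SUP k. H k x)" by (rule LIMSEQ_SUP)
    moreover have "(\<lambda>k. H k x) \<longlonglongrightarrow> ennreal \<bar>f x\<bar>"
    proof -
      have "(\<lambda>k. \<bar>F k x\<bar>) \<longlonglongrightarrow> \<bar>f x\<bar>" by (rule tendsto_rabs) (use gx in blast)
      then have "(\<lambda>k. ennreal \<bar>F k x\<bar>) \<longlonglongrightarrow> ennreal \<bar>f x\<bar>" by (rule tendsto_ennrealI)
      moreover have "(\<lambda>k. H k x) = (\<lambda>k. ennreal \<bar>F k x\<bar>)" using gx by auto
      ultimately show ?thesis by simp
    qed
    ultimately show "(SUP k. H k x) = ennreal \<bar>f x\<bar>" by (rule LIMSEQ_unique)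
  qed
  have "BBM_norm p \<tau> q r f = Np p \<tau> q r (\<lambda>x. SUP k. H k x)"
    unfolding BBM_eq[OF q1] using Hsup by (intro NN_cong_AE[OF q1 r1 t1]) (auto elim!: eventually_mono)
  also have "\<dots> = (SUP k. Np p \<tau> q r (H k))" by (rule Np_SUP[where g=H, OF q1 r1 t1 Hinc Hm])
  also have "\<dots> = (SUP k. BBM_norm p \<tau> q r (F k))"
    unfolding BBM_eq[OF q1] using Hk by (intro SUP_cong refl NN_cong_AE[OF q1 r1 t1]) (auto elim!: eventually_mono)
  finally have "(\<lambda>k. BBM_norm p \<tau> q r (F k)) \<longlonglongrightarrow> BBM_norm p \<tau> q r f"
    using LIMSEQ_SUP[OF inc] by simp
  with inc show ?thesis by simp
qed

end

lemma geom_half_le: "(\<Sum>i<I. (1/2::real) ^ (i + j)) \<le> 2 * (1/2) ^ j"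
proof -
  have "(\<Sum>i<I. (1/2::real) ^ (i + j)) = (1/2)^j * (\<Sum>i<I. (1/2::real) ^ i)"
    by (simp add: power_add sum_distrib_left mult.commute)
  also have "(\<Sum>i<I. (1/2::real) ^ i) = 2 * (1 - (1/2)^I)" by (simp add: sum_gp_strict)
  also have "\<dots> \<le> 2" by simp
  finally show ?thesis by (simp add: mult.commute)
qed

context
  fixes p \<tau> q r :: ennreal
  assumes q1: "1 \<le> q" and r1: "1 \<le> r" and t1: "1 \<le> \<tau>"
begin

lemma NN_tail:
  fixes D :: "nat \<Rightarrow> real^'n \<Rightarrow> ennreal"
  assumes Dm[measurable]: "\<And>i. D i \<in> borel_measurable lebesgue" and DN: "\<And>i. Np p \<tau> q r (D i) \<le> ennreal ((1/2)^i)"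
  shows "Np p \<tau> q r (\<lambda>x. \<Sum>i. D (i + j) x) \<le> ennreal (2 * (1/2)^j)"
proof -
  define S where "S I x = (\<Sum>i<I. D (i + j) x)" for I x
  have Sm[measurable]: "S I \<in> borel_measurable lebesgue" for I unfolding S_def by measurable
  have Sinc: "S I x \<le> S (Suc I) x" for I x unfolding S_def by simp
  have "(\<lambda>x. \<Sum>i. D (i + j) x) = (\<lambda>x. SUP I. S I x)" unfolding S_def by (simp add: suminf_eq_SUP)
  then have "Np p \<tau> q r (\<lambda>x. \<Sum>i. D (i + j) x) = (SUP I. Np p \<tau> q r (S I))"
    using Np_SUP[where g=S, OF q1 r1 t1 Sinc Sm] by simp
  also have "\<dots> \<le> ennreal (2 * (1/2)^j)"
  proof (rule SUP_least)
    fix I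
    have "Np p \<tau> q r (S I) \<le> (\<Sum>i<I. Np p \<tau> q r (D (i + j)))"
      unfolding S_def by (rule NN_sum[OF q1 r1 t1]) auto
    also have "\<dots> \<le> (\<Sum>i<I. ennreal ((1/2)^(i + j)))" by (intro sum_mono DN)
    also have "\<dots> = ennreal (\<Sum>i<I. (1/2)^(i + j))" by simp
    also have "\<dots> \<le> ennreal (2 * (1/2)^j)" by (intro ennreal_leI geom_half_le)
    finally show "Np p \<tau> q r (S I) \<le> ennreal (2 * (1/2)^j)" .
  qed
  finally show ?thesis .
qed

lemma complete:
  fixes F :: "nat \<Rightarrow> real^'n \<Rightarrow> real"
  assumes FX: "\<forall>k. F k \<in> BBM_space p \<tau> q r"
    and cau: "\<forall>e>0. \<exists>K. \<forall>k\<ge>K. \<forall>l\<ge>K. BBM_norm p \<tau> q r (\<lambda>x. F k x - F l x) < e"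
  shows "\<exists>f \<in> BBM_space p \<tau> q r. (\<lambda>k. BBM_norm p \<tau> q r (\<lambda>x. F k x - f x)) \<longlonglongrightarrow> 0"
proof -
  let ?B = "BBM_norm p \<tau> q r"
  have Fm[measurable]: "F k \<in> borel_measurable lebesgue" for k using FX BBM_space_meas[OF q1 r1 t1] by auto
  have "\<forall>j. \<exists>K. \<forall>k\<ge>K. \<forall>l\<ge>K. ?B (\<lambda>x. F k x - F l x) < ennreal ((1/2)^j)"
  proof
    fix j :: nat
    have "ennreal ((1/2)^j) > 0" by simp
    then show "\<exists>K. \<forall>k\<ge>K. \<forall>l\<ge>K. ?B (\<lambda>x. F k x - F l x) < ennreal ((1/2)^j)" using cau by blast
  qed
  then obtain K where K: "\<And>j k l. k \<ge> K j \<Longrightarrow> l \<ge> K j \<Longrightarrow> ?B (\<lambda>x. F k x - F l x) < ennreal ((1/2)^j)"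
    by metis
  define \<phi> where "\<phi> j = (\<Sum>i\<le>j. K i) + j" for j
  have \<phi>K: "K j \<le> \<phi> j" for j
  proof -
    have "K j \<le> (\<Sum>i\<le>j. K i)" by (rule member_le_sum) auto
    then show ?thesis unfolding \<phi>_def by simp
  qed
  have \<phi>suc: "\<phi> j \<le> \<phi> (Suc j)" for j unfolding \<phi>_def by simp
  have \<phi>mono: "j \<le> j' \<Longrightarrow> \<phi> j \<le> \<phi> j'" for j j' using lift_Suc_mono_le[of \<phi>, OF \<phi>suc] by blast
  have C: "\<phi> j \<le> k \<Longrightarrow> \<phi> j \<le> l \<Longrightarrow> ?B (\<lambda>x. F k x - F l x) < ennreal ((1/2)^j)" for j k l
    using K[of j k l] \<phi>K[of j] by simp
  define D where "D j x = ennreal \<bar>F (\<phi> (Suc j)) x - F (\<phi> j) x\<bar>" for j x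
  have Dm[measurable]: "D j \<in> borel_measurable lebesgue" for j unfolding D_def by measurable
  have DN: "Np p \<tau> q r (D j) \<le> ennreal ((1/2)^j)" for j
  proof -
    have "Np p \<tau> q r (D j) = ?B (\<lambda>x. F (\<phi> (Suc j)) x - F (\<phi> j) x)"
      unfolding BBM_eq[OF q1] D_def ..
    also have "\<dots> < ennreal ((1/2)^j)" using \<phi>suc by (intro C) auto
    finally show ?thesis by simp
  qed
  define T where "T j x = (\<Sum>i. D (i + j) x)" for j x
  have Tm[measurable]: "T j \<in> borel_measurable lebesgue" for j unfolding T_def by measurable
  have TN: "Np p \<tau> q r (T j) \<le> ennreal (2 * (1/2)^j)" for j
    unfolding T_def by (rule NN_tail[OF Dm DN])
  define G where "G x = ennreal \<bar>F (\<phi> 0) x\<bar> + T 0 x" for x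
  have Gm[measurable]: "G \<in> borel_measurable lebesgue" unfolding G_def by measurable
  have GN: "Np p \<tau> q r G < top"
  proof -
    have "Np p \<tau> q r G \<le> Np p \<tau> q r (\<lambda>x. ennreal \<bar>F (\<phi> 0) x\<bar>) + Np p \<tau> q r (T 0)"
      unfolding G_def by (rule Np_add[OF q1 r1 t1]) measurable
    also have "\<dots> \<le> ?B (F (\<phi> 0)) + ennreal (2 * (1/2)^0)"
      unfolding BBM_eq[OF q1] by (intro add_left_mono TN)
    also have "\<dots> < top" using FX BBM_space_iff[OF q1 r1 t1 Fm] by simp
    finally show ?thesis .
  qed
  have Gfin: "AE x in lebesgue. G x \<noteq> top"
  proof -
    have "\<forall>k::nat. AE x in lebesgue. x \<in> ball 0 (real k) \<longrightarrow> G x \<noteq> top"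
    proof
      fix k :: nat
      obtain Cb :: real where Cb: "\<forall>g \<in> borel_measurable lebesgue. (\<integral>\<^sup>+x. g x * indicator (ball (0::real^'n) (real k)) x \<partial>lebesgue) \<le> ennreal Cb * Np p \<tau> q r g"
        using local_int[OF q1 r1 t1, of "ball (0::real^'n) (real k)"] by auto
      have "(\<integral>\<^sup>+x. G x * indicator (ball 0 (real k)) x \<partial>lebesgue) \<le> ennreal Cb * Np p \<tau> q r G"
        using Cb Gm by blast
      also have "\<dots> < top" using GN by (simp add: ennreal_mult_less_top)
      finally have fin: "(\<integral>\<^sup>+x. G x * indicator (ball 0 (real k)) x \<partial>lebesgue) \<noteq> top" by simp
      have "AE x in lebesgue. G x * indicator (ball 0 (real k)) x \<noteq> top"
      proof -
        have [measurable]: "ball (0::real^'n) (real k) \<in> sets lebesgue" by (rule fmeasurableD[OF lmeasurable_ball])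
        have mGb: "(\<lambda>x. G x * indicator (ball 0 (real k)) x) \<in> borel_measurable lebesgue" by measurable
        show ?thesis using nn_integral_PInf_AE[OF mGb] fin by simp
      qed
      then show "AE x in lebesgue. x \<in> ball 0 (real k) \<longrightarrow> G x \<noteq> top"
        by (rule eventually_mono) (auto split: split_indicator)
    qed
    then have "AE x in lebesgue. \<forall>k::nat. x \<in> ball 0 (real k) \<longrightarrow> G x \<noteq> top"
      by (rule AE_all_countable[THEN iffD2])
    then show ?thesis
    proof (rule eventually_mono)
      fix x :: "real^'n" assume H: "\<forall>k::nat. x \<in> ball 0 (real k) \<longrightarrow> G x \<noteq> top"
      obtain k :: nat where "norm x < real k" using reals_Archimedean2 by blast
      then have "x \<in> ball 0 (real k)" by simp
      then show "G x \<noteq> top" using H by blast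
    qed
  qed
  define f where "f x = lim (\<lambda>J. F (\<phi> J) x)" for x
  have fm[measurable]: "f \<in> borel_measurable lebesgue" unfolding f_def by measurable
  have pw: "(\<lambda>J. F (\<phi> J) x) \<longlonglongrightarrow> f x \<and> (\<forall>j. ennreal \<bar>F (\<phi> j) x - f x\<bar> \<le> T j x)"
    if Gx: "G x \<noteq> top" for x
  proof -
    define d where "d j = F (\<phi> (Suc j)) x - F (\<phi> j) x" for j
    have T0: "T 0 x = (\<Sum>j. ennreal \<bar>d j\<bar>)" unfolding T_def D_def d_def by simp
    have "T 0 x \<noteq> top" using Gx unfolding G_def by auto
    then have sa: "summable (\<lambda>j. \<bar>d j\<bar>)" unfolding T0 by (intro summable_suminf_not_top) auto
    then have sd: "summable d" by (rule summable_rabs_cancel)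
    have tele: "(\<Sum>i<I. d (i + j)) = F (\<phi> (I + j)) x - F (\<phi> j) x" for I j
      using sum_lessThan_telescope[of "\<lambda>n. F (\<phi> (n + j)) x" I] unfolding d_def by simp
    have "(\<lambda>I. \<Sum>i<I. d (i + 0)) \<longlonglongrightarrow> suminf d" using summable_sums[OF sd] unfolding sums_def by simp
    then have "(\<lambda>I. F (\<phi> I) x - F (\<phi> 0) x) \<longlonglongrightarrow> suminf d" unfolding tele by simp
    then have "(\<lambda>I. F (\<phi> I) x - F (\<phi> 0) x + F (\<phi> 0) x) \<longlonglongrightarrow> suminf d + F (\<phi> 0) x"
      by (intro tendsto_add) auto
    then have "convergent (\<lambda>I. F (\<phi> I) x)" unfolding convergent_def by auto
    then have conv: "(\<lambda>J. F (\<phi> J) x) \<longlonglongrightarrow> f x" unfolding f_def by (simp add: convergent_LIMSEQ_iff)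
    have "ennreal \<bar>F (\<phi> j) x - f x\<bar> \<le> T j x" for j
    proof -
      have "(\<lambda>I. F (\<phi> (I + j)) x) \<longlonglongrightarrow> f x" using LIMSEQ_ignore_initial_segment[OF conv, of j] .
      then have "(\<lambda>I. F (\<phi> (I + j)) x - F (\<phi> j) x) \<longlonglongrightarrow> f x - F (\<phi> j) x" by (intro tendsto_diff) auto
      then have "(\<lambda>i. d (i + j)) sums (f x - F (\<phi> j) x)" unfolding sums_def tele .
      then have eq: "f x - F (\<phi> j) x = (\<Sum>i. d (i + j))" by (rule sums_unique)
      have saj: "summable (\<lambda>i. \<bar>d (i + j)\<bar>)" using summable_ignore_initial_segment[OF sa, of j] .
      have "\<bar>F (\<phi> j) x - f x\<bar> = \<bar>\<Sum>i. d (i + j)\<bar>" using eq by (simp add: abs_minus_commute)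
      also have "\<dots> \<le> (\<Sum>i. \<bar>d (i + j)\<bar>)" using saj by (rule summable_rabs)
      finally have "ennreal \<bar>F (\<phi> j) x - f x\<bar> \<le> ennreal (\<Sum>i. \<bar>d (i + j)\<bar>)" by (rule ennreal_leI)
      also have "\<dots> = (\<Sum>i. ennreal \<bar>d (i + j)\<bar>)" using saj by (intro suminf_ennreal2[symmetric]) auto
      also have "\<dots> = T j x" unfolding T_def D_def d_def by simp
      finally show ?thesis .
    qed
    with conv show ?thesis by blast
  qed
  have TjN: "?B (\<lambda>x. F (\<phi> j) x - f x) \<le> ennreal (2 * (1/2)^j)" for j
  proof -
    have "?B (\<lambda>x. F (\<phi> j) x - f x) \<le> Np p \<tau> q r (T j)"
      unfolding BBM_eq[OF q1] using Gfin by (intro Np_mono[OF q1 r1 t1]) (auto elim!: eventually_mono dest: pw)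
    also have "\<dots> \<le> ennreal (2 * (1/2)^j)" by (rule TN)
    finally show ?thesis .
  qed
  have fX: "f \<in> BBM_space p \<tau> q r"
  proof -
    have "?B f \<le> ?B (\<lambda>x. F (\<phi> 0) x + (- (F (\<phi> 0) x - f x)))" by (intro part_b[OF q1 r1 t1] AE_I2) simp
    also have "\<dots> \<le> ?B (F (\<phi> 0)) + ?B (\<lambda>x. - (F (\<phi> 0) x - f x))" by (rule part_e[OF q1 r1 t1]) measurable
    also have "?B (\<lambda>x. - (F (\<phi> 0) x - f x)) \<le> ?B (\<lambda>x. F (\<phi> 0) x - f x)" by (intro part_b[OF q1 r1 t1] AE_I2) simp
    also have "\<dots> \<le> ennreal (2 * (1/2)^0)" by (rule TjN)
    also have "?B (F (\<phi> 0)) + ennreal (2 * (1/2)^0) < top" using FX BBM_space_iff[OF q1 r1 t1 Fm] by simp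
    finally show ?thesis using BBM_space_iff[OF q1 r1 t1 fm] by simp
  qed
  have bound: "?B (\<lambda>x. F k x - f x) \<le> ennreal (3 * (1/2)^j)" if "\<phi> j \<le> k" for j k
  proof -
    have "?B (\<lambda>x. F k x - f x) \<le> ?B (\<lambda>x. (F k x - F (\<phi> j) x) + (F (\<phi> j) x - f x))"
      by (intro part_b[OF q1 r1 t1] AE_I2) simp
    also have "\<dots> \<le> ?B (\<lambda>x. F k x - F (\<phi> j) x) + ?B (\<lambda>x. F (\<phi> j) x - f x)"
      by (rule part_e[OF q1 r1 t1]) measurable
    also have "\<dots> \<le> ennreal ((1/2)^j) + ennreal (2 * (1/2)^j)"
      using C[of j k "\<phi> j"] that TjN[of j] by (intro add_mono) auto
    also have "\<dots> = ennreal (3 * (1/2)^j)" by (simp flip: ennreal_plus)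
    finally show ?thesis .
  qed
  have "(\<lambda>k. ?B (\<lambda>x. F k x - f x)) \<longlonglongrightarrow> 0"
  proof (rule order_tendstoI)
    fix a :: ennreal assume "a < 0" then show "eventually (\<lambda>k. a < ?B (\<lambda>x. F k x - f x)) sequentially" by simp
  next
    fix a :: ennreal assume a: "0 < a"
    have "(\<lambda>j. 3 * (1/2::real)^j) \<longlonglongrightarrow> 0" by (intro tendsto_mult_right_zero LIMSEQ_realpow_zero) auto
    then have "(\<lambda>j. ennreal (3 * (1/2::real)^j)) \<longlonglongrightarrow> ennreal 0" by (rule tendsto_ennrealI)
    then have "eventually (\<lambda>j. ennreal (3 * (1/2::real)^j) < a) sequentially" using a by (intro order_tendstoD(2)) auto
    then obtain j where j: "ennreal (3 * (1/2::real)^j) < a" by (auto simp: eventually_sequentially)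
    have "eventually (\<lambda>k. \<phi> j \<le> k) sequentially" by (auto simp: eventually_sequentially)
    then show "eventually (\<lambda>k. ?B (\<lambda>x. F k x - f x) < a) sequentially"
      by (rule eventually_mono) (use bound j in \<open>blast intro: le_less_trans\<close>)
  qed
  with fX show ?thesis by blast
qed

end

lemma part_d:
  fixes p q r \<tau> :: ennreal and c :: "real^'n" and \<rho> :: real
  assumes hyp: "(1 \<le> q \<and> q < p \<and> p < r \<and> 1 \<le> \<tau> \<and> \<tau> < top)
         \<or> (1 \<le> q \<and> q \<le> p \<and> p \<le> r \<and> \<tau> = top)"
  shows "indicator (ball c \<rho>) \<in> BBM_space p \<tau> q r"
proof -
  have q1: "1 \<le> q" and r1: "1 \<le> r" and t1: "1 \<le> \<tau>" using hyp by (auto intro: order_trans less_imp_le)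
  have Bm[measurable]: "ball c \<rho> \<in> sets lebesgue" by (rule fmeasurableD[OF lmeasurable_ball])
  define E where "E = ball c \<rho> \<union> dyadic_cube 0 (0::int^'n)"
  have Em[measurable]: "E \<in> sets lebesgue" unfolding E_def by measurable
  have "emeasure lebesgue E \<le> emeasure lebesgue (ball c \<rho>) + emeasure lebesgue (dyadic_cube 0 (0::int^'n))"
    unfolding E_def by (rule emeasure_subadditive) measurable
  also have "\<dots> < top" using lmeasurable_ball[of c \<rho>] emeasure_cube0[of "0::int^'n"]
    by (simp add: fmeasurable_def)
  finally have Efin: "emeasure lebesgue E < top" .
  define \<mu> where "\<mu> = measure lebesgue E"
  have mE: "emeasure lebesgue E = ennreal \<mu>" unfolding \<mu>_def using Efin by (simp add: emeasure_eq_ennreal_measure)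
  have "1 \<le> emeasure lebesgue E"
    using emeasure_mono[of "dyadic_cube 0 (0::int^'n)" E lebesgue] Em emeasure_cube0[of "0::int^'n"]
    unfolding E_def by auto
  then have mu: "\<mu> > 0" using mE by (cases "\<mu> > 0") (auto simp: ennreal_le_iff2 not_less)
  have "BBM_norm p \<tau> q r (indicator (ball c \<rho>)) = Np p \<tau> q r (indicator (ball c \<rho>))"
    unfolding BBM_eq[OF q1] ennreal_abs_ind ..
  also have "\<dots> \<le> Np p \<tau> q r (indicator E)"
    by (intro Np_mono[OF q1 r1 t1] AE_I2) (auto simp: E_def split: split_indicator)
  also have "\<dots> < top" by (rule Np_ind_finite[OF hyp Em mE mu])
  finally have fin: "BBM_norm p \<tau> q r (indicator (ball c \<rho>)) < top" .
  have im: "(indicator (ball c \<rho>) :: real^'n \<Rightarrow> real) \<in> borel_measurable lebesgue" by measurable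
  show ?thesis using BBM_space_iff[OF q1 r1 t1 im] fin by simp
qed

theorem lemma4p10:
  fixes p q r \<tau> :: ennreal
  assumes "(1 \<le> q \<and> q < p \<and> p < r \<and> 1 \<le> \<tau> \<and> \<tau> < top)
         \<or> (1 \<le> q \<and> q \<le> p \<and> p \<le> r \<and> \<tau> = top)"
  shows "ball_Banach_function_space (BBM_space p \<tau> q r :: (real ^ 'n \<Rightarrow> real) set)
                                    (BBM_norm p \<tau> q r)"
proof -
  have q1: "1 \<le> q" and r1: "1 \<le> r" and t1: "1 \<le> \<tau>" using assms by (auto intro: order_trans less_imp_le)
  note meas = BBM_space_meas[OF q1 r1 t1]
  show ?thesis
    unfolding ball_Banach_function_space_def
  proof (intro conjI)
    show "BBM_space p \<tau> q r \<subseteq> borel_measurable lebesgue" by (rule meas)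
    show "\<forall>f\<in>borel_measurable lebesgue. (f \<in> (BBM_space p \<tau> q r :: (real ^ 'n \<Rightarrow> real) set)) = (BBM_norm p \<tau> q r f < top)"
      using BBM_space_iff[OF q1 r1 t1] by blast
    show "\<forall>f\<in>(BBM_space p \<tau> q r :: (real ^ 'n \<Rightarrow> real) set). \<forall>c. BBM_norm p \<tau> q r (\<lambda>x. c * f x) = ennreal \<bar>c\<bar> * BBM_norm p \<tau> q r f"
      using part_homog[OF q1 r1 t1] meas by blast
    show "\<forall>f\<in>borel_measurable lebesgue. BBM_norm p \<tau> q r f = 0 \<longrightarrow> (AE x in lebesgue. (f :: real ^ 'n \<Rightarrow> real) x = 0)"
      using part_a[OF q1 r1 t1] by blast
    show "\<forall>f\<in>borel_measurable lebesgue. \<forall>g\<in>borel_measurable lebesgue.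
        (AE x in lebesgue. \<bar>g x\<bar> \<le> \<bar>(f :: real ^ 'n \<Rightarrow> real) x\<bar>) \<longrightarrow> BBM_norm p \<tau> q r g \<le> BBM_norm p \<tau> q r f"
      using part_b[OF q1 r1 t1] by blast
    show "\<forall>F f. (\<forall>k. F k \<in> borel_measurable lebesgue) \<longrightarrow> f \<in> borel_measurable lebesgue \<longrightarrow>
        (\<forall>k. AE x in lebesgue. 0 \<le> F k x \<and> F k x \<le> F (Suc k) x) \<longrightarrow>
        (AE x in lebesgue. (\<lambda>k. F k x) \<longlonglongrightarrow> (f :: real ^ 'n \<Rightarrow> real) x) \<longrightarrow>
        incseq (\<lambda>k. BBM_norm p \<tau> q r (F k)) \<and> (\<lambda>k. BBM_norm p \<tau> q r (F k)) \<longlonglongrightarrow> BBM_norm p \<tau> q r f"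
      using part_c[OF q1 r1 t1] by blast
    show "\<forall>c r'. indicator (ball c r') \<in> (BBM_space p \<tau> q r :: (real ^ 'n \<Rightarrow> real) set)"
      using part_d[OF assms] by blast
    show "\<forall>f\<in>(BBM_space p \<tau> q r :: (real ^ 'n \<Rightarrow> real) set). \<forall>g\<in>BBM_space p \<tau> q r.
        BBM_norm p \<tau> q r (\<lambda>x. f x + g x) \<le> BBM_norm p \<tau> q r f + BBM_norm p \<tau> q r g"
      using part_e[OF q1 r1 t1] meas by blast
    show "\<forall>c r'. \<exists>C::real. \<forall>f\<in>(BBM_space p \<tau> q r :: (real ^ 'n \<Rightarrow> real) set).
        (\<integral>\<^sup>+ x. ennreal \<bar>f x\<bar> * indicator (ball c r') x \<partial>lebesgue) \<le> ennreal C * BBM_norm p \<tau> q r f"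
      using part_f[OF q1 r1 t1] by blast
    show "\<forall>F. (\<forall>k. F k \<in> (BBM_space p \<tau> q r :: (real ^ 'n \<Rightarrow> real) set)) \<longrightarrow>
        (\<forall>e>0. \<exists>K. \<forall>k\<ge>K. \<forall>l\<ge>K. BBM_norm p \<tau> q r (\<lambda>x. F k x - F l x) < e) \<longrightarrow>
        (\<exists>f \<in> BBM_space p \<tau> q r. (\<lambda>k. BBM_norm p \<tau> q r (\<lambda>x. F k x - f x)) \<longlonglongrightarrow> 0)"
      using complete[OF q1 r1 t1] by blast
  qed
qed

end
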